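(* For every $q\ge2$, $\beta>0$, every odd integer $L$ and every finite $d$-dimensional cube $V\subset\mathbb{Z}^d$, $\lambda(\boldsymbol{I}_{\rm SW})\ge\lambda(\boldsymbol{I}_\mathcal{D})$.
   Context: Potts measure with free boundary on $G=(V,E)$: $\pi(\sigma)\propto\exp(\beta\,\#\{(u,v)\in E:\sigma(u)=\sigma(v)\})$; $p=1-e^{-\beta}$. Tilings: for $x\in\{0,\dots,L+2\}^d$, $C(x)$ is the union over $h\in\mathbb{Z}^d$ of the cubes $\{y:\|y-(x+(L+3)h)\|_\infty\le(L-1)/2\}$; $B_x=C(x)\cap V$, listed as $\mathcal{D}=\{B_1,\dots,B_m\}$, $m=(L+3)^d$. Isolated vertices dynamics $\boldsymbol{I}_{\rm SW}$: from $\sigma_t$, include each edge with equal endpoint spins independently with probability $p$ to get $A_t$; give each isolated vertex of $(V,A_t)$ an independent uniform spin in $\{1,\dots,q\}$; discard edges. Isolated vertices tiled dynamics $\boldsymbol{I}_\mathcal{D}$: same first step; then pick $k\in\{1,\dots,m\}$ uniformly and give an independent uniform spin only to each isolated vertex of $(V,A_t)$ lying in $B_k$; discard edges. $\lambda(P)=1-\max\{|\lambda_2|,|\lambda_N|\}$ for reversible $P$. *)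

theory Defs
  imports "HOL-Library.FuncSet" "Jordan_Normal_Form.Char_Poly"
begin

(* Vertices of Z^d are integer lists of length d. *)

definition cube :: "nat \<Rightarrow> int list \<Rightarrow> nat \<Rightarrow> int list set" where
  "cube d c n = {x. length x = d \<and> (\<forall>i<d. c!i \<le> x!i \<and> x!i < c!i + int n)}"

definition edges :: "int list set \<Rightarrow> int list set set" where
  "edges V = {{u,v} | u v. u \<in> V \<and> v \<in> V \<and> length u = length v \<and>
                 (\<Sum>i<length u. \<bar>u!i - v!i\<bar>) = 1}"

definition tile :: "nat \<Rightarrow> nat \<Rightarrow> int list \<Rightarrow> int list set" where
  "tile d L x = {y. length y = d \<and> (\<exists>h::int list. length h = d \<and>
      (\<forall>i<d. \<bar>y!i - (x!i + (int L + 3) * h!i)\<bar> \<le> (int L - 1) div 2))}"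

definition tile_index :: "nat \<Rightarrow> nat \<Rightarrow> int list set" where
  "tile_index d L = {x. length x = d \<and> (\<forall>i<d. 0 \<le> x!i \<and> x!i \<le> int L + 2)}"

definition configs :: "int list set \<Rightarrow> nat \<Rightarrow> (int list \<Rightarrow> nat) set" where
  "configs V q = V \<rightarrow>\<^sub>E {1..q}"

definition mono_edges :: "int list set \<Rightarrow> (int list \<Rightarrow> nat) \<Rightarrow> int list set set" where
  "mono_edges V \<sigma> = {e \<in> edges V. \<exists>u v. e = {u,v} \<and> \<sigma> u = \<sigma> v}"

definition isolated :: "int list set \<Rightarrow> int list set set \<Rightarrow> int list set" where
  "isolated V A = {v \<in> V. \<forall>e\<in>A. v \<notin> e}"

(* probability that bond percolation with parameter p on F yields exactly A *)
definition perc :: "real \<Rightarrow> 'a set \<Rightarrow> 'a set \<Rightarrow> real" where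
  "perc p F A = p ^ card A * (1 - p) ^ (card F - card A)"

(* probability of moving from sigma to tau when the vertices of U get independent
   uniform spins in {1..q} and all other spins are kept *)
definition resample :: "int list set \<Rightarrow> nat \<Rightarrow> int list set \<Rightarrow> (int list \<Rightarrow> nat) \<Rightarrow> (int list \<Rightarrow> nat) \<Rightarrow> real" where
  "resample V q U \<sigma> \<tau> =
     (if \<tau> \<in> configs V q \<and> (\<forall>v\<in>V - U. \<tau> v = \<sigma> v) then 1 / real q ^ card U else 0)"

definition P_SW :: "real \<Rightarrow> nat \<Rightarrow> int list set \<Rightarrow> (int list \<Rightarrow> nat) \<Rightarrow> (int list \<Rightarrow> nat) \<Rightarrow> real" where
  "P_SW \<beta> q V \<sigma> \<tau> =
     (\<Sum>A\<in>Pow (mono_edges V \<sigma>). perc (1 - exp (-\<beta>)) (mono_edges V \<sigma>) A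
         * resample V q (isolated V A) \<sigma> \<tau>)"

(* I_D: isolated vertices tiled dynamics; choosing k uniform in {1..m} is choosing
   x uniform in {0..L+2}^d *)
definition P_D :: "real \<Rightarrow> nat \<Rightarrow> nat \<Rightarrow> nat \<Rightarrow> int list set \<Rightarrow> (int list \<Rightarrow> nat) \<Rightarrow> (int list \<Rightarrow> nat) \<Rightarrow> real" where
  "P_D \<beta> q d L V \<sigma> \<tau> =
     (1 / real (card (tile_index d L))) *
     (\<Sum>x\<in>tile_index d L. \<Sum>A\<in>Pow (mono_edges V \<sigma>).
         perc (1 - exp (-\<beta>)) (mono_edges V \<sigma>) A
         * resample V q (isolated V A \<inter> (tile d L x \<inter> V)) \<sigma> \<tau>)"

definition state_enum :: "'s set \<Rightarrow> nat \<Rightarrow> 's" where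
  "state_enum S = (SOME f. bij_betw f {..<card S} S)"

definition trans_mat :: "'s set \<Rightarrow> ('s \<Rightarrow> 's \<Rightarrow> real) \<Rightarrow> real mat" where
  "trans_mat S P = mat (card S) (card S) (\<lambda>(i,j). P (state_enum S i) (state_enum S j))"

(* eigenvalues 1 = lambda_1 >= lambda_2 >= ... >= lambda_N (real, as for reversible P),
   listed with multiplicity as the roots of the characteristic polynomial *)
definition eigen_list :: "real mat \<Rightarrow> real list" where
  "eigen_list M = (THE es. sorted_wrt (\<lambda>a b. a \<ge> b) es \<and>
                      char_poly M = prod_list (map (\<lambda>e. [:-e, 1:]) es))"

definition spectral_gap :: "real mat \<Rightarrow> real" where
  "spectral_gap M = (let es = eigen_list M in 1 - max \<bar>es ! 1\<bar> \<bar>last es\<bar>)"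

end

theory Submission
  imports Defs "Jordan_Normal_Form.Schur_Decomposition"
begin

definition ip :: "nat \<Rightarrow> (nat \<Rightarrow> real) \<Rightarrow> (nat \<Rightarrow> real) \<Rightarrow> real" where
  "ip N x y = (\<Sum>a<N. x a * y a)"

definition mv :: "nat \<Rightarrow> (nat \<Rightarrow> nat \<Rightarrow> real) \<Rightarrow> (nat \<Rightarrow> real) \<Rightarrow> nat \<Rightarrow> real" where
  "mv N S x = (\<lambda>a. \<Sum>b<N. S a b * x b)"

definition inspan :: "nat \<Rightarrow> (nat \<Rightarrow> nat \<Rightarrow> real) \<Rightarrow> nat \<Rightarrow> (nat \<Rightarrow> real) \<Rightarrow> bool" where
  "inspan N v j x = (\<exists>c. \<forall>a<N. x a = (\<Sum>k<j. c k * v k a))"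

lemma ip_cong: "(\<And>a. a < N \<Longrightarrow> x a = x' a) \<Longrightarrow> (\<And>a. a < N \<Longrightarrow> y a = y' a) \<Longrightarrow> ip N x y = ip N x' y'"
  unfolding ip_def by (rule sum.cong) auto

lemma ip_sym: "ip N x y = ip N y x"
  unfolding ip_def by (simp add: mult.commute)

lemma ip_sq_nonneg: "ip N x x \<ge> 0"
  unfolding ip_def by (rule sum_nonneg) auto

lemma ip_sq_zero: "ip N x x = 0 \<Longrightarrow> a < N \<Longrightarrow> x a = 0"
  unfolding ip_def
  using sum_nonneg_eq_0_iff[of "{..<N}" "\<lambda>a. x a * x a"] by auto

lemma ip_lin_left: "ip N (\<lambda>a. \<Sum>k<m. c k * v k a) y = (\<Sum>k<m. c k * ip N (v k) y)"
  unfolding ip_def by (simp add: sum_distrib_left sum_distrib_right mult.assoc sum.swap[of _ "{..<N}"])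

lemma ip_sub_left: "ip N (\<lambda>a. x a - z a) y = ip N x y - ip N z y"
  unfolding ip_def by (simp add: left_diff_distrib sum_subtractf)

lemma ip_add_left: "ip N (\<lambda>a. x a + z a) y = ip N x y + ip N z y"
  unfolding ip_def by (simp add: distrib_right sum.distrib)

lemma ip_scale_left: "ip N (\<lambda>a. s * x a) y = s * ip N x y"
  unfolding ip_def by (simp add: sum_distrib_left mult.assoc)

lemma mv_sym:
  assumes "\<And>a b. a < N \<Longrightarrow> b < N \<Longrightarrow> S a b = S b a"
  shows "ip N (mv N S x) y = ip N x (mv N S y)"
proof -
  have "ip N (mv N S x) y = (\<Sum>a<N. \<Sum>b<N. S a b * x b * y a)"
    unfolding ip_def mv_def by (simp add: sum_distrib_right)
  also have "\<dots> = (\<Sum>b<N. \<Sum>a<N. S a b * x b * y a)" by (rule sum.swap)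
  also have "\<dots> = (\<Sum>b<N. \<Sum>a<N. x b * (S b a * y a))"
    by (intro sum.cong refl) (simp add: assms mult_ac)
  also have "\<dots> = ip N x (mv N S y)"
    unfolding ip_def mv_def by (simp add: sum_distrib_left)
  finally show ?thesis .
qed

lemma mv_lin: "mv N S (\<lambda>a. \<Sum>k<m. c k * v k a) a = (\<Sum>k<m. c k * mv N S (v k) a)"
  unfolding mv_def by (simp add: sum_distrib_left sum.swap[of _ "{..<N}"] mult_ac)

lemma mv_sub: "mv N S (\<lambda>a. x a - z a) a = mv N S x a - mv N S z a"
  unfolding mv_def by (simp add: right_diff_distrib sum_subtractf)

lemma mv_cong: "(\<And>a. a < N \<Longrightarrow> x a = x' a) \<Longrightarrow> mv N S x = mv N S x'"
  unfolding mv_def by (intro ext sum.cong) auto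

lemma inspan_cong: "inspan N v j x \<Longrightarrow> (\<And>a. a < N \<Longrightarrow> x a = y a) \<Longrightarrow> inspan N v j y"
  unfolding inspan_def by metis

lemma inspan_base: "k < j \<Longrightarrow> inspan N v j (v k)"
  unfolding inspan_def
proof (rule exI[of _ "\<lambda>i. if i = k then 1 else 0"], intro allI impI)
  fix a assume "k < j"
  have "(\<Sum>i<j. (if i = k then 1 else 0) * v i a) = (\<Sum>i<j. if i = k then v i a else 0)"
    by (intro sum.cong) auto
  also have "\<dots> = v k a" using \<open>k < j\<close> by (simp add: sum.delta')
  finally show "v k a = (\<Sum>i<j. (if i = k then 1 else 0) * v i a)" by simp
qed

lemma inspan_zero: "inspan N v j (\<lambda>a. 0)"
  unfolding inspan_def by (rule exI[of _ "\<lambda>i. 0"]) simp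

lemma inspan_add: "inspan N v j x \<Longrightarrow> inspan N v j y \<Longrightarrow> inspan N v j (\<lambda>a. x a + y a)"
  unfolding inspan_def
proof (elim exE)
  fix c d assume c: "\<forall>a<N. x a = (\<Sum>k<j. c k * v k a)" and d: "\<forall>a<N. y a = (\<Sum>k<j. d k * v k a)"
  show "\<exists>e. \<forall>a<N. x a + y a = (\<Sum>k<j. e k * v k a)"
    by (rule exI[of _ "\<lambda>k. c k + d k"]) (simp add: c d distrib_right sum.distrib)
qed

lemma inspan_scale: "inspan N v j x \<Longrightarrow> inspan N v j (\<lambda>a. s * x a)"
  unfolding inspan_def
proof (elim exE)
  fix c assume c: "\<forall>a<N. x a = (\<Sum>k<j. c k * v k a)"
  show "\<exists>e. \<forall>a<N. s * x a = (\<Sum>k<j. e k * v k a)"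
    by (rule exI[of _ "\<lambda>k. s * c k"]) (simp add: c sum_distrib_left mult.assoc)
qed

lemma inspan_lin: "(\<And>i. i < (m::nat) \<Longrightarrow> inspan N v j (x i)) \<Longrightarrow> inspan N v j (\<lambda>a. \<Sum>i<m. b i * x i a)"
proof (induction m)
  case 0 then show ?case by (simp add: inspan_zero)
next
  case (Suc m)
  have "inspan N v j (\<lambda>a. (\<Sum>i<m. b i * x i a) + b m * x m a)"
    by (rule inspan_add, rule Suc.IH, simp add: Suc.prems, rule inspan_scale, simp add: Suc.prems)
  then show ?case by simp
qed

lemma inspan_trans:
  assumes "\<And>k. k < j \<Longrightarrow> inspan N w j' (v k)" and "inspan N v j x"
  shows "inspan N w j' x"
proof -
  from assms(2) obtain c where c: "\<forall>a<N. x a = (\<Sum>k<j. c k * v k a)" unfolding inspan_def by blast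
  have "inspan N w j' (\<lambda>a. \<Sum>k<j. c k * v k a)" by (rule inspan_lin) (rule assms(1))
  then show ?thesis by (rule inspan_cong) (simp add: c)
qed

lemma inspan_mono: "inspan N v j x \<Longrightarrow> j \<le> j' \<Longrightarrow> inspan N v j' x"
  by (rule inspan_trans[of j N v j'], rule inspan_base) auto

lemma inspan_orth_zero:
  assumes "inspan N q j z" and "\<And>k. k < j \<Longrightarrow> ip N z (q k) = 0" and "a < N"
  shows "z a = 0"
proof -
  from assms(1) obtain c where c: "\<forall>a<N. z a = (\<Sum>k<j. c k * q k a)" unfolding inspan_def by blast
  have "ip N z z = ip N (\<lambda>a. \<Sum>k<j. c k * q k a) z" by (rule ip_cong) (auto simp: c)
  also have "\<dots> = (\<Sum>k<j. c k * ip N (q k) z)" by (rule ip_lin_left)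
  also have "\<dots> = 0" using assms(2) by (simp add: ip_sym)
  finally show ?thesis using ip_sq_zero assms(3) by blast
qed

lemma inspan_ext: "(\<And>k. k < j \<Longrightarrow> v k = w k) \<Longrightarrow> inspan N v j x \<Longrightarrow> inspan N w j x"
  unfolding inspan_def by (metis (no_types, lifting) lessThan_iff sum.cong)

lemma inspan_diff: "inspan N v j x \<Longrightarrow> inspan N v j y \<Longrightarrow> inspan N v j (\<lambda>a. x a - y a)"
proof -
  assume "inspan N v j x" "inspan N v j y"
  then have "inspan N v j (\<lambda>a. x a + (-1) * y a)" by (intro inspan_add inspan_scale)
  then show ?thesis by (rule inspan_cong) simp
qed

lemma orth_sum:
  assumes "\<And>k. k < (j::nat) \<Longrightarrow> k \<noteq> i \<Longrightarrow> ip N (q k) (q i) = 0" "i < j"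
  shows "(\<Sum>k<j. c k * ip N (q k) (q i)) = c i * ip N (q i) (q i)"
proof -
  have "(\<Sum>k<j. c k * ip N (q k) (q i)) = (\<Sum>k<j. if k = i then c i * ip N (q i) (q i) else 0)"
    by (intro sum.cong) (auto simp: assms)
  also have "\<dots> = c i * ip N (q i) (q i)" using assms(2) by (subst sum.delta) auto
  finally show ?thesis .
qed

lemma tri_orth:
  assumes sym: "\<And>a b. a < N \<Longrightarrow> b < N \<Longrightarrow> S a b = S b a"
  and tri: "\<And>j a. j < N \<Longrightarrow> a < N \<Longrightarrow> mv N S (p j) a = (\<Sum>k<j. B k j * p k a) + e j * p j a"
  and inv: "\<And>i k. i < N \<Longrightarrow> k < N \<Longrightarrow> (\<Sum>a<N. Qm i a * p k a) = (if i = k then 1 else 0)"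
  shows "j \<le> N \<Longrightarrow> \<exists>q. (\<forall>i<j. ip N (q i) (q i) > 0 \<and> (\<forall>a<N. mv N S (q i) a = e i * q i a))
     \<and> (\<forall>i<j. \<forall>i'<j. i \<noteq> i' \<longrightarrow> ip N (q i) (q i') = 0)
     \<and> (\<forall>i<j. inspan N p j (q i)) \<and> (\<forall>i<j. inspan N q j (p i))"
proof (induction j)
  case 0 then show ?case by auto
next
  case (Suc j)
  then have jN: "j < N" by simp
  from Suc.IH[OF Suc_leD[OF Suc.prems]] obtain q where
    H1: "\<forall>i<j. ip N (q i) (q i) > 0 \<and> (\<forall>a<N. mv N S (q i) a = e i * q i a)"
    and H2: "\<forall>i<j. \<forall>i'<j. i \<noteq> i' \<longrightarrow> ip N (q i) (q i') = 0"
    and H3: "\<forall>i<j. inspan N p j (q i)" and H4: "\<forall>i<j. inspan N q j (p i)"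
    by (elim exE conjE)
  have pos: "\<And>i. i < j \<Longrightarrow> ip N (q i) (q i) > 0" using H1 by simp
  have eig: "\<And>i a. i < j \<Longrightarrow> a < N \<Longrightarrow> mv N S (q i) a = e i * q i a" using H1 by simp
  have orth: "\<And>i i'. i < j \<Longrightarrow> i' < j \<Longrightarrow> i \<noteq> i' \<Longrightarrow> ip N (q i) (q i') = 0" using H2 by simp
  have sp1: "\<And>i. i < j \<Longrightarrow> inspan N p j (q i)" using H3 by simp
  have sp2: "\<And>i. i < j \<Longrightarrow> inspan N q j (p i)" using H4 by simp
  define \<alpha> where "\<alpha> k = ip N (p j) (q k) / ip N (q k) (q k)" for k
  define r where "r = (\<lambda>a. p j a - (\<Sum>k<j. \<alpha> k * q k a))"
  define q' where "q' = q(j := r)"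
  have r_orth: "ip N r (q i) = 0" if "i < j" for i
  proof -
    have "ip N r (q i) = ip N (p j) (q i) - (\<Sum>k<j. \<alpha> k * ip N (q k) (q i))"
      unfolding r_def ip_sub_left ip_lin_left ..
    also have "(\<Sum>k<j. \<alpha> k * ip N (q k) (q i)) = \<alpha> i * ip N (q i) (q i)"
      by (rule orth_sum) (auto simp: orth that)
    also have "\<alpha> i * ip N (q i) (q i) = ip N (p j) (q i)"
      unfolding \<alpha>_def using pos[OF that] by simp
    finally show ?thesis by simp
  qed
  have r_pos: "ip N r r > 0"
  proof (rule ccontr)
    assume "\<not> ip N r r > 0"
    with ip_sq_nonneg[of N r] have "ip N r r = 0" by linarith
    then have r0: "\<And>a. a < N \<Longrightarrow> r a = 0" using ip_sq_zero by blast
    have "inspan N q j (\<lambda>a. \<Sum>k<j. \<alpha> k * q k a)"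
      by (rule inspan_lin) (rule inspan_base)
    then have "inspan N q j (p j)" by (rule inspan_cong) (use r0 in \<open>auto simp: r_def\<close>)
    then have "inspan N p j (p j)" using inspan_trans[of j N p j q] sp1 by blast
    then obtain c where c: "\<And>a. a < N \<Longrightarrow> p j a = (\<Sum>k<j. c k * p k a)" unfolding inspan_def by blast
    have "1 = (\<Sum>a<N. Qm j a * p j a)" using inv[OF jN jN] by simp
    also have "\<dots> = (\<Sum>a<N. Qm j a * (\<Sum>k<j. c k * p k a))" by (intro sum.cong) (auto simp: c)
    also have "\<dots> = (\<Sum>k<j. c k * (\<Sum>a<N. Qm j a * p k a))"
      by (simp add: sum_distrib_left sum.swap[of _ "{..<N}"] mult_ac)
    also have "\<dots> = 0" using inv jN by auto
    finally show False by simp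
  qed
  have r_eig: "mv N S r a = e j * r a" if aN: "a < N" for a
  proof -
    define z where "z = (\<lambda>a. mv N S r a - e j * r a)"
    have zform: "z a = (\<Sum>k<j. B k j * p k a) + (\<Sum>k<j. (e j * \<alpha> k - \<alpha> k * e k) * q k a)" if "a < N" for a
    proof -
      have "mv N S r a = mv N S (p j) a - (\<Sum>k<j. \<alpha> k * mv N S (q k) a)"
        unfolding r_def mv_sub mv_lin ..
      also have "(\<Sum>k<j. \<alpha> k * mv N S (q k) a) = (\<Sum>k<j. \<alpha> k * e k * q k a)"
        by (intro sum.cong) (auto simp: eig that)
      finally have "mv N S r a = (\<Sum>k<j. B k j * p k a) + e j * p j a - (\<Sum>k<j. \<alpha> k * e k * q k a)"
        using tri[OF jN that] by simp
      then show ?thesis unfolding z_def r_def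
        by (simp add: algebra_simps sum_distrib_left sum_subtractf)
    qed
    have zsp: "inspan N q j z"
    proof -
      have "inspan N q j (\<lambda>a. (\<Sum>k<j. B k j * p k a) + (\<Sum>k<j. (e j * \<alpha> k - \<alpha> k * e k) * q k a))"
        by (intro inspan_add inspan_lin inspan_base sp2) auto
      then show ?thesis by (rule inspan_cong) (simp add: zform)
    qed
    have zorth: "ip N z (q i) = 0" if "i < j" for i
    proof -
      have "ip N z (q i) = ip N (mv N S r) (q i) - e j * ip N r (q i)"
        unfolding z_def ip_sub_left ip_scale_left ..
      also have "ip N (mv N S r) (q i) = ip N r (mv N S (q i))" by (rule mv_sym) (rule sym)
      also have "\<dots> = ip N r (\<lambda>a. e i * q i a)" by (rule ip_cong) (auto simp: eig that)
      also have "\<dots> = e i * ip N r (q i)" by (subst ip_sym, subst ip_scale_left, simp add: ip_sym)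
      finally show ?thesis by (simp add: r_orth that)
    qed
    have "z a = 0" by (rule inspan_orth_zero[OF zsp zorth aN])
    then show ?thesis unfolding z_def by simp
  qed
  show ?case
  proof (intro exI[of _ q'] conjI allI impI)
    fix i assume i: "i < Suc j"
    show "ip N (q' i) (q' i) > 0" using i pos r_pos by (cases "i = j") (auto simp: q'_def)
  next
    fix i a assume i: "i < Suc j" and a: "a < N"
    show "mv N S (q' i) a = e i * q' i a" using i eig r_eig a by (cases "i = j") (auto simp: q'_def)
  next
    fix i i' assume i: "i < Suc j" and i': "i' < Suc j" and ne: "i \<noteq> i'"
    show "ip N (q' i) (q' i') = 0"
    proof (cases "i = j")
      case True then show ?thesis using ne i' r_orth by (auto simp: q'_def)
    next
      case False
      show ?thesis
      proof (cases "i' = j")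
        case True then show ?thesis using False i r_orth by (auto simp: q'_def ip_sym)
      next
        case False2: False
        then show ?thesis using False i i' ne orth by (auto simp: q'_def)
      qed
    qed
  next
    fix i assume i: "i < Suc j"
    show "inspan N p (Suc j) (q' i)"
    proof (cases "i = j")
      case True
      have "inspan N p (Suc j) r" unfolding r_def
        by (intro inspan_diff inspan_base inspan_lin inspan_mono[OF sp1]) auto
      then show ?thesis using True by (simp add: q'_def)
    next
      case False
      then show ?thesis using i inspan_mono[OF sp1] by (auto simp: q'_def)
    qed
  next
    fix i assume i: "i < Suc j"
    have ext: "inspan N q j x \<Longrightarrow> inspan N q' (Suc j) x" for x
      by (rule inspan_mono[OF inspan_ext[of j q q']]) (auto simp: q'_def)
    show "inspan N q' (Suc j) (p i)"
    proof (cases "i = j")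
      case True
      have "inspan N q' (Suc j) (q' j)" by (rule inspan_base) simp
      then have rs: "inspan N q' (Suc j) r" by (simp add: q'_def)
      have "inspan N q' (Suc j) (\<lambda>a. r a + (\<Sum>k<j. \<alpha> k * q k a))"
        by (intro inspan_add rs ext inspan_lin inspan_base)
      then show ?thesis using True by (rule_tac inspan_cong) (auto simp: r_def)
    next
      case False
      then show ?thesis using i sp2 ext by auto
    qed
  qed
qed

lemma mat_mult_entry:
  assumes "A \<in> carrier_mat N N" "B \<in> carrier_mat N N" "i < N" "j < N"
  shows "(A * B) $$ (i, j) = (\<Sum>k<N. A $$ (i, k) * B $$ (k, j))"
  using assms by (simp add: scalar_prod_def atLeast0LessThan)

lemma spectral_basis:
  fixes M :: "real mat"
  assumes M: "M \<in> carrier_mat N N" and sym: "\<And>a b. a < N \<Longrightarrow> b < N \<Longrightarrow> M $$ (a, b) = M $$ (b, a)"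
   and cp: "char_poly M = (\<Prod>e\<leftarrow>es. [:-e, 1:])"
  shows "length es = N \<and> (\<exists>q. (\<forall>i<N. ip N (q i) (q i) > 0 \<and>
            (\<forall>a<N. mv N (\<lambda>a b. M $$ (a, b)) (q i) a = es ! i * q i a))
        \<and> (\<forall>i<N. \<forall>i'<N. i \<noteq> i' \<longrightarrow> ip N (q i) (q i') = 0) \<and> (\<forall>x. inspan N q N x))"
proof -
  have "degree (char_poly M) = N" using degree_monic_char_poly[OF M] by simp
  with degree_linear_factors[of uminus es] cp have len: "length es = N" by simp
  obtain B P Q where sd: "schur_decomposition M es = (B, P, Q)" by (cases "schur_decomposition M es") auto
  from schur_decomposition[OF M cp sd] have wit: "similar_mat_wit M B P Q"
    and ut: "upper_triangular B" and dg: "diag_mat B = es" by auto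
  from wit M have B: "B \<in> carrier_mat N N" and P: "P \<in> carrier_mat N N" and Q: "Q \<in> carrier_mat N N"
    and PQ: "P * Q = 1\<^sub>m N" and QP: "Q * P = 1\<^sub>m N" and MPBQ: "M = P * B * Q"
    unfolding similar_mat_wit_def Let_def by auto
  have MP: "M * P = P * B"
  proof -
    have "M * P = P * B * Q * P" using MPBQ by simp
    also have "\<dots> = P * B * (Q * P)" using P B Q by (simp add: assoc_mult_mat[of _ N N _ N _ N])
    also have "\<dots> = P * B" using QP P B by simp
    finally show ?thesis .
  qed
  define S where "S = (\<lambda>a b. M $$ (a, b))"
  define p where "p = (\<lambda>j a. P $$ (a, j))"
  define Qm where "Qm = (\<lambda>i a. Q $$ (i, a))"
  define Bf where "Bf = (\<lambda>k j. B $$ (k, j))"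
  have esj: "es ! j = B $$ (j, j)" if "j < N" for j
    using dg[symmetric] that B unfolding diag_mat_def by simp
  have tri: "mv N S (p j) a = (\<Sum>k<j. Bf k j * p k a) + es ! j * p j a" if j: "j < N" and a: "a < N" for j a
  proof -
    have "mv N S (p j) a = (M * P) $$ (a, j)"
      unfolding mv_def S_def p_def using mat_mult_entry[OF M P a j] by simp
    also have "\<dots> = (P * B) $$ (a, j)" using MP by simp
    also have "\<dots> = (\<Sum>k<N. P $$ (a, k) * B $$ (k, j))" using mat_mult_entry[OF P B a j] .
    also have "\<dots> = (\<Sum>k<Suc j. P $$ (a, k) * B $$ (k, j))"
    proof (rule sum.mono_neutral_right)
      show "\<forall>k\<in>{..<N} - {..<Suc j}. P $$ (a, k) * B $$ (k, j) = 0"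
        using ut B j unfolding upper_triangular_def by auto
    qed (use j in auto)
    also have "\<dots> = (\<Sum>k<j. Bf k j * p k a) + es ! j * p j a"
      using esj[OF j] by (simp add: Bf_def p_def mult.commute)
    finally show ?thesis .
  qed
  have inv: "(\<Sum>a<N. Qm i a * p k a) = (if i = k then 1 else 0)" if "i < N" "k < N" for i k
    using mat_mult_entry[OF Q P that] QP that by (simp add: Qm_def p_def)
  have symS: "S a b = S b a" if "a < N" "b < N" for a b using sym that by (simp add: S_def)
  obtain q where H1: "\<forall>i<N. ip N (q i) (q i) > 0 \<and> (\<forall>a<N. mv N S (q i) a = es ! i * q i a)"
    and H2: "\<forall>i<N. \<forall>i'<N. i \<noteq> i' \<longrightarrow> ip N (q i) (q i') = 0"
    and H4: "\<forall>i<N. inspan N q N (p i)"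
    using tri_orth[of N S p Bf "\<lambda>j. es ! j" Qm N, OF symS tri inv] by blast
  have spp: "inspan N p N x" for x
    unfolding inspan_def
  proof (rule exI[of _ "\<lambda>k. \<Sum>b<N. Q $$ (k, b) * x b"], intro allI impI)
    fix a assume a: "a < N"
    have "(\<Sum>b<N. (P * Q) $$ (a, b) * x b) = (\<Sum>b<N. if a = b then x b else 0)"
      by (intro sum.cong) (auto simp: PQ a)
    then have "x a = (\<Sum>b<N. (P * Q) $$ (a, b) * x b)" using a by simp
    also have "\<dots> = (\<Sum>b<N. \<Sum>k<N. P $$ (a, k) * Q $$ (k, b) * x b)"
      using mat_mult_entry[OF P Q a] by (simp add: sum_distrib_right)
    also have "\<dots> = (\<Sum>k<N. (\<Sum>b<N. Q $$ (k, b) * x b) * p k a)"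
      by (subst sum.swap) (simp add: p_def sum_distrib_left sum_distrib_right mult_ac)
    finally show "x a = (\<Sum>k<N. (\<Sum>b<N. Q $$ (k, b) * x b) * p k a)" .
  qed
  have "inspan N q N x" for x using inspan_trans[of N N q N p x] H4 spp by blast
  with H1 H2 len show ?thesis unfolding S_def by blast
qed

lemma prod_list_mset: "(\<Prod>e\<leftarrow>es. f e) = prod_mset (image_mset f (mset es))"
  by (induction es) auto

lemma linear_factors_mset:
  fixes es es' :: "'a :: field list"
  assumes "(\<Prod>e\<leftarrow>es. [:-e, 1:]) = (\<Prod>e\<leftarrow>es'. [:-e, 1:])"
  shows "mset es = mset es'"
  using assms
proof (induction es arbitrary: es')
  case Nil
  have "degree (\<Prod>e\<leftarrow>es'. [:-e, 1:]) = length es'" using degree_linear_factors[of uminus es'] by simp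
  with Nil show ?case by simp
next
  case (Cons a es)
  have "poly (\<Prod>e\<leftarrow>a # es. [:-e, 1:]) a = 0" by (simp add: poly_prod_list)
  then have "poly (\<Prod>e\<leftarrow>es'. [:-e, 1:]) a = 0" by (simp only: Cons.prems)
  then have "(\<Prod>e\<leftarrow>es'. a - e) = 0" by (simp add: poly_prod_list o_def)
  then have a: "a \<in> set es'" by (auto simp: prod_list_zero_iff)
  then have m: "mset es' = add_mset a (mset (remove1 a es'))" by (simp add: insert_DiffM)
  have "[:-a, 1:] * (\<Prod>e\<leftarrow>es. [:-e, 1:]) = [:-a, 1:] * (\<Prod>e\<leftarrow>remove1 a es'. [:-e, 1:])"
    using Cons.prems unfolding prod_list_mset m by simp
  then have "(\<Prod>e\<leftarrow>es. [:-e, 1:]) = (\<Prod>e\<leftarrow>remove1 a es'. [:-e, 1:])"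
    by (metis mult_left_cancel pCons_eq_0_iff zero_neq_one)
  from Cons.IH[OF this] have "mset (a # es) = add_mset a (mset (remove1 a es'))" by simp
  then show ?case using m by metis
qed

lemma sorted_desc_unique:
  fixes es es' :: "real list"
  assumes "sorted_wrt (\<lambda>a b. a \<ge> b) es" "sorted_wrt (\<lambda>a b. a \<ge> b) es'" "mset es = mset es'"
  shows "es = es'"
proof -
  have s1: "sorted (rev es)" using assms(1) by (simp add: sorted_wrt_rev)
  have s2: "sorted (rev es')" using assms(2) by (simp add: sorted_wrt_rev)
  have m: "mset (rev es) = mset (rev es')" using assms(3) by simp
  have "sort (rev es') = rev es" by (rule properties_for_sort[OF m s1])
  moreover have "sort (rev es') = rev es'" using s2 by (rule sorted_sort_id)
  ultimately show ?thesis by simp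
qed

lemma eigen_list_eq:
  assumes "char_poly M = (\<Prod>e\<leftarrow>es. [:-e, 1:])" "sorted_wrt (\<lambda>a b. a \<ge> b) es"
  shows "eigen_list M = es"
  unfolding eigen_list_def
proof (rule the_equality)
  show "sorted_wrt (\<lambda>a b. a \<ge> b) es \<and> char_poly M = prod_list (map (\<lambda>e. [:- e, 1:]) es)" using assms by simp
next
  fix es' assume "sorted_wrt (\<lambda>a b. a \<ge> b) es' \<and> char_poly M = prod_list (map (\<lambda>e. [:- e, 1:]) es')"
  then have "sorted_wrt (\<lambda>a b. a \<ge> b) es'" "(\<Prod>e\<leftarrow>es'. [:-e, 1:]) = (\<Prod>e\<leftarrow>es. [:-e, 1:])"
    using assms(1) by auto
  then show "es' = es" using assms(2) linear_factors_mset[of es' es] sorted_desc_unique[of es' es] by blast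
qed

lemma sorted_exists:
  fixes es :: "real list"
  shows "\<exists>es'. sorted_wrt (\<lambda>a b. a \<ge> b) es' \<and> (\<Prod>e\<leftarrow>es'. [:-e, 1:]) = (\<Prod>e\<leftarrow>es. [:-e, 1:])"
proof (intro exI conjI)
  show "sorted_wrt (\<lambda>a b. a \<ge> b) (rev (sort es))" by (simp add: sorted_wrt_rev)
  show "(\<Prod>e\<leftarrow>rev (sort es). [:-e, 1:]) = (\<Prod>e\<leftarrow>es. [:-e, 1:])" unfolding prod_list_mset by simp
qed

lemma real_split:
  fixes M :: "real mat"
  assumes M: "M \<in> carrier_mat N N" and sym: "\<And>a b. a < N \<Longrightarrow> b < N \<Longrightarrow> M $$ (a, b) = M $$ (b, a)"
  shows "\<exists>es. char_poly M = (\<Prod>e\<leftarrow>es. [:-e, 1:])"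
proof -
  define Mc where "Mc = map_mat (of_real :: real \<Rightarrow> complex) M"
  have Mc: "Mc \<in> carrier_mat N N" using M by (simp add: Mc_def)
  obtain as where as: "char_poly Mc = (\<Prod>a\<leftarrow>as. [:-a, 1:])" using char_poly_factorized[OF Mc] by blast
  have real: "of_real (Re a) = a" if a: "a \<in> set as" for a
  proof -
    have "poly (char_poly Mc) a = 0" using a unfolding as
      by (simp add: poly_prod_list o_def prod_list_zero_iff)
    then have "eigenvalue Mc a" using eigenvalue_root_char_poly[OF Mc] by simp
    then obtain v where v: "v \<in> carrier_vec N" "v \<noteq> 0\<^sub>v N" "Mc *\<^sub>v v = a \<cdot>\<^sub>v v"
      unfolding eigenvalue_def eigenvector_def using Mc by auto
    have Mv: "(\<Sum>j<N. of_real (M $$ (i, j)) * v $ j) = a * v $ i" if "i < N" for i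
    proof -
      have "(Mc *\<^sub>v v) $ i = a * v $ i" using v(3) that v(1) by simp
      then show ?thesis using that Mc M v(1) by (simp add: Mc_def scalar_prod_def atLeast0LessThan)
    qed
    define s where "s = (\<Sum>i<N. cnj (v $ i) * (\<Sum>j<N. of_real (M $$ (i, j)) * v $ j))"
    define R where "R = (\<Sum>i<N. (cmod (v $ i))\<^sup>2)"
    have sR: "s = a * of_real R"
    proof -
      have "s = (\<Sum>i<N. cnj (v $ i) * (a * v $ i))" unfolding s_def by (intro sum.cong refl) (simp add: Mv)
      also have "\<dots> = (\<Sum>i<N. a * (cnj (v $ i) * v $ i))" by (simp add: mult_ac)
      also have "\<dots> = (\<Sum>i<N. a * of_real ((cmod (v $ i))\<^sup>2))"
        by (intro sum.cong refl) (simp only: complex_norm_square mult.commute)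
      also have "\<dots> = a * of_real R" unfolding R_def by (simp add: sum_distrib_left of_real_sum)
      finally show ?thesis .
    qed
    have cs: "cnj s = s"
    proof -
      have "cnj s = (\<Sum>i<N. \<Sum>j<N. v $ i * of_real (M $$ (i, j)) * cnj (v $ j))"
        unfolding s_def by (simp add: sum_distrib_left mult_ac)
      also have "\<dots> = (\<Sum>j<N. \<Sum>i<N. v $ i * of_real (M $$ (i, j)) * cnj (v $ j))" by (rule sum.swap)
      also have "\<dots> = s" unfolding s_def
        by (intro sum.cong refl) (auto simp: sum_distrib_left sym mult_ac)
      finally show ?thesis .
    qed
    have Rpos: "R > 0"
    proof -
      obtain i where i: "i < N" "v $ i \<noteq> 0" using v(1,2) by (metis eq_vecI carrier_vecD index_zero_vec)
      have "(cmod (v $ i))\<^sup>2 > 0" using i by simp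
      moreover have "(cmod (v $ i))\<^sup>2 \<le> R" unfolding R_def
        by (rule member_le_sum) (use i in auto)
      ultimately show ?thesis by linarith
    qed
    have "cnj a * of_real R = a * of_real R" using cs sR by simp
    then have ca: "cnj a = a" using Rpos by simp
    have "Im a = 0" using arg_cong[OF ca, of Im] by simp
    then show ?thesis by (simp add: complex_eq_iff)
  qed
  interpret mp: map_poly_inj_idom_hom "of_real :: real \<Rightarrow> complex" ..
  have cph: "char_poly (map_mat (of_real::real\<Rightarrow>complex) M) = map_poly of_real (char_poly M)"
    by (rule of_real_hom.char_poly_hom[OF M])
  have "map_poly of_real (char_poly M) = char_poly Mc" unfolding Mc_def cph ..
  also have "\<dots> = (\<Prod>a\<leftarrow>map (\<lambda>a. of_real (Re a)) as. [:-a, 1:])" unfolding as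
    by (simp add: real o_def cong: map_cong)
  also have "\<dots> = map_poly of_real (\<Prod>e\<leftarrow>map Re as. [:-e, 1:])"
    by (simp add: mp.hom_prod_list o_def)
  finally show ?thesis by (intro exI) (rule mp.injectivity)
qed

definition obasis :: "nat \<Rightarrow> (nat \<Rightarrow> nat \<Rightarrow> real) \<Rightarrow> (nat \<Rightarrow> real) \<Rightarrow> (nat \<Rightarrow> nat \<Rightarrow> real) \<Rightarrow> bool" where
  "obasis N S e q \<longleftrightarrow> (\<forall>i<N. ip N (q i) (q i) > 0 \<and> (\<forall>a<N. mv N S (q i) a = e i * q i a))
        \<and> (\<forall>i<N. \<forall>i'<N. i \<noteq> i' \<longrightarrow> ip N (q i) (q i') = 0) \<and> (\<forall>x. inspan N q N x)"

lemma ip_expand: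
  assumes orth: "\<And>i j. i < m \<Longrightarrow> j < m \<Longrightarrow> i \<noteq> j \<Longrightarrow> ip N (q i) (q j) = 0"
  shows "ip N (\<lambda>a. \<Sum>k<m. c k * q k a) (\<lambda>a. \<Sum>k<m. d k * q k a) = (\<Sum>k<(m::nat). c k * d k * ip N (q k) (q k))"
proof -
  have "ip N (\<lambda>a. \<Sum>k<m. c k * q k a) (\<lambda>a. \<Sum>k<m. d k * q k a)
     = (\<Sum>k<m. c k * ip N (q k) (\<lambda>a. \<Sum>l<m. d l * q l a))" by (rule ip_lin_left)
  also have "\<dots> = (\<Sum>k<m. c k * (d k * ip N (q k) (q k)))"
  proof (intro sum.cong refl)
    fix k assume k: "k \<in> {..<m}"
    have "ip N (q k) (\<lambda>a. \<Sum>l<m. d l * q l a) = (\<Sum>l<m. d l * ip N (q l) (q k))"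
      by (subst ip_sym) (rule ip_lin_left)
    also have "\<dots> = d k * ip N (q k) (q k)" by (rule orth_sum) (use k orth in auto)
    finally show "c k * ip N (q k) (\<lambda>a. \<Sum>l<m. d l * q l a) = c k * (d k * ip N (q k) (q k))" by simp
  qed
  finally show ?thesis by (simp add: mult.assoc)
qed

lemma qform:
  assumes ob: "obasis N S e q" and f: "\<And>a. a < N \<Longrightarrow> f a = (\<Sum>k<N. c k * q k a)"
  shows "ip N f (mv N S f) = (\<Sum>k<N. (c k)\<^sup>2 * e k * ip N (q k) (q k))"
    and "ip N f f = (\<Sum>k<N. (c k)\<^sup>2 * ip N (q k) (q k))"
    and "\<And>i. i < N \<Longrightarrow> ip N f (q i) = c i * ip N (q i) (q i)"
proof -
  from ob have eig: "\<And>i a. i < N \<Longrightarrow> a < N \<Longrightarrow> mv N S (q i) a = e i * q i a"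
    and orth: "\<And>i j. i < N \<Longrightarrow> j < N \<Longrightarrow> i \<noteq> j \<Longrightarrow> ip N (q i) (q j) = 0"
    unfolding obasis_def by auto
  have mvf: "mv N S f a = (\<Sum>k<N. (c k * e k) * q k a)" if "a < N" for a
  proof -
    have "mv N S f = mv N S (\<lambda>a. \<Sum>k<N. c k * q k a)" by (rule mv_cong) (rule f)
    then have "mv N S f a = mv N S (\<lambda>a. \<Sum>k<N. c k * q k a) a" by simp
    also have "\<dots> = (\<Sum>k<N. c k * mv N S (q k) a)" by (rule mv_lin)
    also have "\<dots> = (\<Sum>k<N. (c k * e k) * q k a)" by (intro sum.cong) (auto simp: eig that)
    finally show ?thesis .
  qed
  have "ip N f (mv N S f) = ip N (\<lambda>a. \<Sum>k<N. c k * q k a) (\<lambda>a. \<Sum>k<N. (c k * e k) * q k a)"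
    by (rule ip_cong) (simp_all add: f mvf)
  also have "\<dots> = (\<Sum>k<N. c k * (c k * e k) * ip N (q k) (q k))" by (rule ip_expand) (rule orth)
  finally show "ip N f (mv N S f) = (\<Sum>k<N. (c k)\<^sup>2 * e k * ip N (q k) (q k))" by (simp add: power2_eq_square mult_ac)
  have "ip N f f = ip N (\<lambda>a. \<Sum>k<N. c k * q k a) (\<lambda>a. \<Sum>k<N. c k * q k a)"
    by (rule ip_cong) (simp_all add: f)
  also have "\<dots> = (\<Sum>k<N. c k * c k * ip N (q k) (q k))" by (rule ip_expand) (rule orth)
  finally show "ip N f f = (\<Sum>k<N. (c k)\<^sup>2 * ip N (q k) (q k))" by (simp add: power2_eq_square)
  fix i assume i: "i < N"
  have "ip N f (q i) = ip N (\<lambda>a. \<Sum>k<N. c k * q k a) (q i)" by (rule ip_cong) (simp_all add: f)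
  also have "\<dots> = (\<Sum>k<N. c k * ip N (q k) (q i))" by (rule ip_lin_left)
  also have "\<dots> = c i * ip N (q i) (q i)" by (rule orth_sum) (use i orth in auto)
  finally show "ip N f (q i) = c i * ip N (q i) (q i)" .
qed

lemma sorted_le1:
  assumes "sorted_wrt (\<lambda>a b. a \<ge> b) (es :: real list)" "1 \<le> k" "k < length es"
  shows "es ! k \<le> es ! 1"
  using assms by (cases "k = 1") (auto simp: sorted_wrt_iff_nth_less)

lemma upper_on_orth:
  assumes ob: "obasis N S (\<lambda>i. es ! i) q" and s: "sorted_wrt (\<lambda>a b. a \<ge> b) es" and len: "length es = N"
    and N: "N \<ge> 2" and orth0: "ip N f (q 0) = 0"
  shows "ip N f (mv N S f) \<le> es ! 1 * ip N f f"
proof -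
  from ob obtain c where c: "\<And>a. a < N \<Longrightarrow> f a = (\<Sum>k<N. c k * q k a)"
    unfolding obasis_def inspan_def by blast
  have pos: "\<And>i. i < N \<Longrightarrow> ip N (q i) (q i) > 0" using ob unfolding obasis_def by auto
  have "c 0 * ip N (q 0) (q 0) = 0" using qform(3)[OF ob c, of 0] orth0 N by simp
  then have c0: "c 0 = 0" using pos[of 0] N by simp
  have "ip N f (mv N S f) = (\<Sum>k<N. (c k)\<^sup>2 * es ! k * ip N (q k) (q k))" by (rule qform(1)[OF ob c])
  also have "\<dots> \<le> (\<Sum>k<N. es ! 1 * ((c k)\<^sup>2 * ip N (q k) (q k)))"
  proof (rule sum_mono)
    fix k assume k: "k \<in> {..<N}"
    show "(c k)\<^sup>2 * es ! k * ip N (q k) (q k) \<le> es ! 1 * ((c k)\<^sup>2 * ip N (q k) (q k))"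
    proof (cases "k = 0")
      case True then show ?thesis by (simp add: c0)
    next
      case False
      then have "es ! k \<le> es ! 1" using sorted_le1[OF s, of k] k len by auto
      moreover have "(c k)\<^sup>2 * ip N (q k) (q k) \<ge> 0" using pos[of k] k by simp
      ultimately show ?thesis by (metis mult.commute mult.left_commute mult_right_mono)
    qed
  qed
  also have "\<dots> = es ! 1 * ip N f f" by (simp add: qform(2)[OF ob c] sum_distrib_left)
  finally show ?thesis .
qed

lemma sum_two:
  assumes "\<And>k. 2 \<le> k \<Longrightarrow> g k = (0::real)" "(N::nat) \<ge> 2"
  shows "(\<Sum>k<N. g k) = g 0 + g 1"
proof -
  have "(\<Sum>k<N. g k) = (\<Sum>k<2. g k)"
    by (rule sum.mono_neutral_right) (use assms in auto)
  also have "\<dots> = g 0 + g 1" by (simp add: numeral_2_eq_2)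
  finally show ?thesis .
qed

lemma lower_exists:
  assumes ob: "obasis N S (\<lambda>i. es ! i) q" and s: "sorted_wrt (\<lambda>a b. a \<ge> b) es" and len: "length es = N"
    and N: "N \<ge> 2"
  shows "\<exists>f. ip N f u = 0 \<and> ip N f f > 0 \<and> ip N f (mv N S f) \<ge> es ! 1 * ip N f f"
proof -
  define \<alpha> where "\<alpha> = (if ip N (q 0) u = 0 then 1 else ip N (q 1) u)"
  define \<beta> where "\<beta> = (if ip N (q 0) u = 0 then 0 else - ip N (q 0) u)"
  define c where "c k = (if k = 0 then \<alpha> else if k = 1 then \<beta> else 0)" for k :: nat
  define f where "f a = (\<Sum>k<N. c k * q k a)" for a
  have pos: "\<And>i. i < N \<Longrightarrow> ip N (q i) (q i) > 0" using ob unfolding obasis_def by auto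
  have e01: "es ! 1 \<le> es ! 0" using s len N by (auto simp: sorted_wrt_iff_nth_less)
  have fu: "ip N f u = \<alpha> * ip N (q 0) u + \<beta> * ip N (q 1) u"
    unfolding f_def ip_lin_left by (subst sum_two[OF _ N]) (auto simp: c_def)
  have fu0: "ip N f u = 0" unfolding fu \<alpha>_def \<beta>_def by (auto simp: algebra_simps)
  have fdef: "\<And>a. a < N \<Longrightarrow> f a = (\<Sum>k<N. c k * q k a)" by (simp add: f_def)
  have "ip N f f = (\<Sum>k<N. (c k)\<^sup>2 * ip N (q k) (q k))" by (rule qform(2)[OF ob fdef])
  also have "\<dots> = (c 0)\<^sup>2 * ip N (q 0) (q 0) + (c 1)\<^sup>2 * ip N (q 1) (q 1)"
    by (rule sum_two[OF _ N]) (simp add: c_def)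
  finally have ff: "ip N f f = \<alpha>\<^sup>2 * ip N (q 0) (q 0) + \<beta>\<^sup>2 * ip N (q 1) (q 1)"
    by (simp add: c_def)
  moreover note ff
  moreover have "ip N f f > 0"
  proof -
    have "\<alpha> \<noteq> 0 \<or> \<beta> \<noteq> 0" unfolding \<alpha>_def \<beta>_def by auto
    then show ?thesis unfolding ff using pos[of 0] pos[of 1] N
      by (auto simp: add_pos_nonneg add_nonneg_pos)
  qed
  moreover have "ip N f (mv N S f) \<ge> es ! 1 * ip N f f"
  proof -
    have "ip N f (mv N S f) = (\<Sum>k<N. (c k)\<^sup>2 * es ! k * ip N (q k) (q k))" by (rule qform(1)[OF ob fdef])
    also have "\<dots> = (c 0)\<^sup>2 * es ! 0 * ip N (q 0) (q 0) + (c 1)\<^sup>2 * es ! 1 * ip N (q 1) (q 1)"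
      by (rule sum_two[OF _ N]) (simp add: c_def)
    finally have "ip N f (mv N S f) = \<alpha>\<^sup>2 * es ! 0 * ip N (q 0) (q 0) + \<beta>\<^sup>2 * es ! 1 * ip N (q 1) (q 1)"
      by (simp add: c_def)
    moreover have "\<alpha>\<^sup>2 * es ! 0 * ip N (q 0) (q 0) \<ge> \<alpha>\<^sup>2 * es ! 1 * ip N (q 0) (q 0)"
      using e01 pos[of 0] N by (intro mult_right_mono mult_left_mono) auto
    ultimately show ?thesis unfolding ff by (simp add: algebra_simps)
  qed
  ultimately show ?thesis using fu0 by blast
qed

lemma sym_eigen:
  fixes M :: "real mat"
  assumes M: "M \<in> carrier_mat N N" and sym: "\<And>a b. a < N \<Longrightarrow> b < N \<Longrightarrow> M $$ (a, b) = M $$ (b, a)"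
  shows "\<exists>q. obasis N (\<lambda>a b. M $$ (a, b)) (\<lambda>i. eigen_list M ! i) q
     \<and> sorted_wrt (\<lambda>a b. a \<ge> b) (eigen_list M) \<and> length (eigen_list M) = N"
proof -
  obtain es0 where es0: "char_poly M = (\<Prod>e\<leftarrow>es0. [:-e, 1:])" using real_split[OF M sym] by blast
  obtain es where s: "sorted_wrt (\<lambda>a b. a \<ge> b) es" and p: "(\<Prod>e\<leftarrow>es. [:-e, 1:]) = (\<Prod>e\<leftarrow>es0. [:-e, 1:])"
    using sorted_exists[of es0] by blast
  have cp: "char_poly M = (\<Prod>e\<leftarrow>es. [:-e, 1:])" using es0 p by simp
  have el: "eigen_list M = es" by (rule eigen_list_eq[OF cp s])
  from spectral_basis[OF M sym cp] obtain q where "length es = N"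
    "\<forall>i<N. ip N (q i) (q i) > 0 \<and> (\<forall>a<N. mv N (\<lambda>a b. M $$ (a, b)) (q i) a = es ! i * q i a)"
    "\<forall>i<N. \<forall>i'<N. i \<noteq> i' \<longrightarrow> ip N (q i) (q i') = 0" "\<forall>x. inspan N q N x" by blast
  then show ?thesis unfolding el obasis_def using s by blast
qed

lemma gap_psd:
  assumes ob: "obasis N S (\<lambda>i. es ! i) q" and s: "sorted_wrt (\<lambda>a b. a \<ge> b) es" and len: "length es = N"
    and N: "N \<ge> 2" and psd: "\<And>x. ip N x (mv N S x) \<ge> 0"
  shows "max \<bar>es ! 1\<bar> \<bar>last es\<bar> = es ! 1"
proof -
  have nn: "es ! i \<ge> 0" if i: "i < N" for i
  proof -
    from ob i have pos: "ip N (q i) (q i) > 0" and eig: "\<And>a. a < N \<Longrightarrow> mv N S (q i) a = es ! i * q i a"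
      unfolding obasis_def by auto
    have "ip N (q i) (mv N S (q i)) = ip N (q i) (\<lambda>a. es ! i * q i a)" by (rule ip_cong) (simp_all add: eig)
    also have "\<dots> = es ! i * ip N (q i) (q i)" by (subst ip_sym, subst ip_scale_left, simp add: ip_sym)
    finally have "es ! i * ip N (q i) (q i) \<ge> 0" using psd[of "q i"] by simp
    with pos show ?thesis by (simp add: zero_le_mult_iff)
  qed
  have "es \<noteq> []" using len N by auto
  then have last: "last es = es ! (N - 1)" using len by (simp add: last_conv_nth)
  have "es ! (N - 1) \<le> es ! 1" by (rule sorted_le1[OF s]) (use len N in auto)
  moreover have "es ! (N - 1) \<ge> 0" using nn N by simp
  moreover have "es ! 1 \<ge> 0" using nn N by simp
  ultimately show ?thesis unfolding last by simp
qed

lemma gap_compare: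
  fixes S1 S2 :: "real mat"
  assumes N: "N \<ge> 2" and S1: "S1 \<in> carrier_mat N N" and S2: "S2 \<in> carrier_mat N N"
    and sym1: "\<And>a b. a < N \<Longrightarrow> b < N \<Longrightarrow> S1 $$ (a, b) = S1 $$ (b, a)"
    and sym2: "\<And>a b. a < N \<Longrightarrow> b < N \<Longrightarrow> S2 $$ (a, b) = S2 $$ (b, a)"
    and psd: "\<And>x. ip N x (mv N (\<lambda>a b. S1 $$ (a, b)) x) \<ge> 0"
    and le: "\<And>x. ip N x (mv N (\<lambda>a b. S1 $$ (a, b)) x) \<le> ip N x (mv N (\<lambda>a b. S2 $$ (a, b)) x)"
  shows "spectral_gap S1 \<ge> spectral_gap S2"
proof -
  obtain q1 where ob1: "obasis N (\<lambda>a b. S1 $$ (a, b)) (\<lambda>i. eigen_list S1 ! i) q1"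
    and s1: "sorted_wrt (\<lambda>a b. a \<ge> b) (eigen_list S1)" and l1: "length (eigen_list S1) = N"
    using sym_eigen[OF S1 sym1] by blast
  obtain q2 where ob2: "obasis N (\<lambda>a b. S2 $$ (a, b)) (\<lambda>i. eigen_list S2 ! i) q2"
    and s2: "sorted_wrt (\<lambda>a b. a \<ge> b) (eigen_list S2)" and l2: "length (eigen_list S2) = N"
    using sym_eigen[OF S2 sym2] by blast
  have psd2: "ip N x (mv N (\<lambda>a b. S2 $$ (a, b)) x) \<ge> 0" for x using psd[of x] le[of x] by linarith
  obtain f where f0: "ip N f (q2 0) = 0" and fpos: "ip N f f > 0"
    and f1: "ip N f (mv N (\<lambda>a b. S1 $$ (a, b)) f) \<ge> eigen_list S1 ! 1 * ip N f f"
    using lower_exists[OF ob1 s1 l1 N, of "q2 0"] by blast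
  have f2: "ip N f (mv N (\<lambda>a b. S2 $$ (a, b)) f) \<le> eigen_list S2 ! 1 * ip N f f"
    by (rule upper_on_orth[OF ob2 s2 l2 N f0])
  have "eigen_list S1 ! 1 * ip N f f \<le> eigen_list S2 ! 1 * ip N f f" using f1 f2 le[of f] by linarith
  then have e12: "eigen_list S1 ! 1 \<le> eigen_list S2 ! 1" using fpos by simp
  have g1: "spectral_gap S1 = 1 - eigen_list S1 ! 1"
    unfolding spectral_gap_def Let_def using gap_psd[OF ob1 s1 l1 N psd] by simp
  have g2: "spectral_gap S2 = 1 - eigen_list S2 ! 1"
    unfolding spectral_gap_def Let_def using gap_psd[OF ob2 s2 l2 N psd2] by simp
  show ?thesis unfolding g1 g2 using e12 by simp
qed

lemma state_enum_bij: "finite S \<Longrightarrow> bij_betw (state_enum S) {..<card S} S"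
proof -
  assume "finite S"
  then obtain h where "bij_betw h {..<card S} S" using ex_bij_betw_nat_finite[of S] by (auto simp: atLeast0LessThan)
  then show ?thesis unfolding state_enum_def by (rule someI[where P = "\<lambda>f. bij_betw f {..<card S} S"])
qed

lemma diag_mult_left:
  assumes "A \<in> carrier_mat N N" "i < N" "j < N"
  shows "(mat N N (\<lambda>(i, j). if i = j then s i else 0) * A) $$ (i, j) = s i * A $$ (i, j)"
proof -
  have "(mat N N (\<lambda>(i, j). if i = j then s i else 0) * A) $$ (i, j)
      = (\<Sum>k<N. (if i = k then s i else 0) * A $$ (k, j))"
    using assms by (simp add: scalar_prod_def atLeast0LessThan)
  also have "\<dots> = (\<Sum>k<N. if i = k then s i * A $$ (k, j) else 0)" by (intro sum.cong) auto
  also have "\<dots> = s i * A $$ (i, j)" using assms by (simp add: sum.delta)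
  finally show ?thesis .
qed

lemma diag_mult_right:
  assumes "A \<in> carrier_mat N N" "i < N" "j < N"
  shows "(A * mat N N (\<lambda>(i, j). if i = j then s i else 0)) $$ (i, j) = A $$ (i, j) * s j"
proof -
  have "(A * mat N N (\<lambda>(i, j). if i = j then s i else 0)) $$ (i, j)
      = (\<Sum>k<N. A $$ (i, k) * (if k = j then s k else 0))"
    using assms by (simp add: scalar_prod_def atLeast0LessThan)
  also have "\<dots> = (\<Sum>k<N. if k = j then A $$ (i, k) * s k else 0)" by (intro sum.cong) auto
  also have "\<dots> = A $$ (i, j) * s j" using assms by (simp add: sum.delta')
  finally show ?thesis .
qed

lemma char_poly_gap:
  assumes "char_poly A = char_poly B" shows "spectral_gap A = spectral_gap B"
  unfolding spectral_gap_def eigen_list_def assms ..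

lemma sym_similar:
  fixes M :: "real mat"
  assumes M: "M \<in> carrier_mat N N" and s: "\<And>i. i < N \<Longrightarrow> s i > 0"
  shows "spectral_gap M = spectral_gap (mat N N (\<lambda>(i, j). s i * M $$ (i, j) / s j))"
proof -
  define D where "D = mat N N (\<lambda>(i, j). if i = j then s i else 0)"
  define Di where "Di = mat N N (\<lambda>(i, j). if i = j then 1 / s i else 0)"
  define S where "S = mat N N (\<lambda>(i, j). s i * M $$ (i, j) / s j)"
  have D: "D \<in> carrier_mat N N" and Di: "Di \<in> carrier_mat N N" and S: "S \<in> carrier_mat N N"
    unfolding D_def Di_def S_def by auto
  have "D * M * Di = S"
  proof (rule eq_matI)
    fix i j assume ij: "i < dim_row S" "j < dim_col S"
    then have i: "i < N" and j: "j < N" using S by auto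
    have "(D * M * Di) $$ (i, j) = (D * M) $$ (i, j) * (1 / s j)"
      unfolding Di_def using diag_mult_right[of "D * M" N i j "\<lambda>i. 1 / s i"] D M i j by simp
    also have "(D * M) $$ (i, j) = s i * M $$ (i, j)"
      unfolding D_def using diag_mult_left[OF M i j] .
    finally show "(D * M * Di) $$ (i, j) = S $$ (i, j)" using i j by (simp add: S_def)
  qed (use D M Di S in auto)
  moreover have "D * Di = 1\<^sub>m N"
  proof (rule eq_matI)
    fix i j assume "i < dim_row (1\<^sub>m N :: real mat)" "j < dim_col (1\<^sub>m N :: real mat)"
    then have i: "i < N" and j: "j < N" by auto
    show "(D * Di) $$ (i, j) = 1\<^sub>m N $$ (i, j)"
      unfolding D_def using diag_mult_left[OF Di i j, of s] i j s[OF i] s[OF j] by (simp add: Di_def)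
  qed (use D Di in auto)
  moreover have "Di * D = 1\<^sub>m N"
  proof (rule eq_matI)
    fix i j assume "i < dim_row (1\<^sub>m N :: real mat)" "j < dim_col (1\<^sub>m N :: real mat)"
    then have i: "i < N" and j: "j < N" by auto
    show "(Di * D) $$ (i, j) = 1\<^sub>m N $$ (i, j)"
      unfolding Di_def using diag_mult_left[OF D i j, of "\<lambda>i. 1 / s i"] i j s[OF i] s[OF j] by (simp add: D_def)
  qed (use D Di in auto)
  ultimately have "similar_mat_wit S M D Di" unfolding similar_mat_wit_def Let_def using S D Di M by auto
  then have "similar_mat S M" unfolding similar_mat_def by blast
  then have "char_poly S = char_poly M" by (rule char_poly_similar)
  then show ?thesis unfolding S_def by (intro char_poly_gap) simp
qed

lemma abstract_gap:
  fixes \<Omega> :: "'s set" and P1 P2 :: "'s \<Rightarrow> 's \<Rightarrow> real" and w :: "'s \<Rightarrow> real"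
  assumes fin: "finite \<Omega>" and card: "card \<Omega> \<ge> 2" and wpos: "\<And>\<sigma>. \<sigma> \<in> \<Omega> \<Longrightarrow> w \<sigma> > 0"
    and rev1: "\<And>\<sigma> \<tau>. \<sigma> \<in> \<Omega> \<Longrightarrow> \<tau> \<in> \<Omega> \<Longrightarrow> w \<sigma> * P1 \<sigma> \<tau> = w \<tau> * P1 \<tau> \<sigma>"
    and rev2: "\<And>\<sigma> \<tau>. \<sigma> \<in> \<Omega> \<Longrightarrow> \<tau> \<in> \<Omega> \<Longrightarrow> w \<sigma> * P2 \<sigma> \<tau> = w \<tau> * P2 \<tau> \<sigma>"
    and psd: "\<And>x. (\<Sum>\<sigma>\<in>\<Omega>. \<Sum>\<tau>\<in>\<Omega>. x \<sigma> * x \<tau> * (w \<sigma> * P1 \<sigma> \<tau>)) \<ge> 0"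
    and le: "\<And>x. (\<Sum>\<sigma>\<in>\<Omega>. \<Sum>\<tau>\<in>\<Omega>. x \<sigma> * x \<tau> * (w \<sigma> * P1 \<sigma> \<tau>))
                 \<le> (\<Sum>\<sigma>\<in>\<Omega>. \<Sum>\<tau>\<in>\<Omega>. x \<sigma> * x \<tau> * (w \<sigma> * P2 \<sigma> \<tau>))"
  shows "spectral_gap (trans_mat \<Omega> P2) \<le> spectral_gap (trans_mat \<Omega> P1)"
proof -
  define N where "N = card \<Omega>"
  define e where "e = state_enum \<Omega>"
  have bij: "bij_betw e {..<N} \<Omega>" unfolding e_def N_def by (rule state_enum_bij[OF fin])
  have eO: "e i \<in> \<Omega>" if "i < N" for i using bij that by (auto simp: bij_betw_def)
  define s where "s i = sqrt (w (e i))" for i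
  have spos: "s i > 0" if "i < N" for i using wpos[OF eO[OF that]] by (simp add: s_def)
  have s2: "(s i)\<^sup>2 = w (e i)" if "i < N" for i using wpos[OF eO[OF that]] by (simp add: s_def)
  define S where "S P = mat N N (\<lambda>(i, j). s i * trans_mat \<Omega> P $$ (i, j) / s j)" for P :: "'s \<Rightarrow> 's \<Rightarrow> real"
  have Mc: "trans_mat \<Omega> P \<in> carrier_mat N N" for P unfolding trans_mat_def N_def by simp
  have Me: "trans_mat \<Omega> P $$ (i, j) = P (e i) (e j)" if "i < N" "j < N" for P i j
    using that unfolding trans_mat_def e_def N_def by simp
  have gapS: "spectral_gap (trans_mat \<Omega> P) = spectral_gap (S P)" for P
    unfolding S_def by (rule sym_similar[OF Mc spos])
  have Sc: "S P \<in> carrier_mat N N" for P unfolding S_def by simp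
  have Se: "S P $$ (i, j) = w (e i) * P (e i) (e j) / (s i * s j)" if "i < N" "j < N" for P i j
  proof -
    have "S P $$ (i, j) = s i * P (e i) (e j) / s j" using that by (simp add: S_def Me)
    also have "\<dots> = (s i)\<^sup>2 * P (e i) (e j) / (s i * s j)" using spos[OF that(1)]
      by (simp add: power2_eq_square)
    finally show ?thesis using s2[OF that(1)] by simp
  qed
  have Ssym: "S P $$ (i, j) = S P $$ (j, i)"
    if rev: "\<And>\<sigma> \<tau>. \<sigma> \<in> \<Omega> \<Longrightarrow> \<tau> \<in> \<Omega> \<Longrightarrow> w \<sigma> * P \<sigma> \<tau> = w \<tau> * P \<tau> \<sigma>" and ij: "i < N" "j < N" for P i j
    using Se[OF ij] Se[OF ij(2,1)] rev[OF eO[OF ij(1)] eO[OF ij(2)]] by (simp add: mult.commute)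
  define y where "y x \<sigma> = x (inv_into {..<N} e \<sigma>) / sqrt (w \<sigma>)" for x \<sigma>
  have ye: "y x (e i) = x i / s i" if "i < N" for x i
    using bij that unfolding y_def s_def by (simp add: bij_betw_inv_into_left)
  have quad: "ip N x (mv N (\<lambda>a b. S P $$ (a, b)) x)
      = (\<Sum>\<sigma>\<in>\<Omega>. \<Sum>\<tau>\<in>\<Omega>. y x \<sigma> * y x \<tau> * (w \<sigma> * P \<sigma> \<tau>))" for x P
  proof -
    have "ip N x (mv N (\<lambda>a b. S P $$ (a, b)) x) = (\<Sum>a<N. \<Sum>b<N. x a * (S P $$ (a, b) * x b))"
      unfolding ip_def mv_def by (simp add: sum_distrib_left)
    also have "\<dots> = (\<Sum>a<N. \<Sum>b<N. y x (e a) * y x (e b) * (w (e a) * P (e a) (e b)))"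
    proof (intro sum.cong refl)
      fix a b assume a: "a \<in> {..<N}" and b: "b \<in> {..<N}"
      then have a': "a < N" and b': "b < N" by auto
      show "x a * (S P $$ (a, b) * x b) = y x (e a) * y x (e b) * (w (e a) * P (e a) (e b))"
        unfolding Se[OF a' b'] ye[OF a'] ye[OF b'] using spos[OF a'] spos[OF b'] by (simp add: field_simps)
    qed
    also have "\<dots> = (\<Sum>a<N. \<Sum>\<tau>\<in>\<Omega>. y x (e a) * y x \<tau> * (w (e a) * P (e a) \<tau>))"
      by (intro sum.cong refl) (rule sum.reindex_bij_betw[OF bij])
    also have "\<dots> = (\<Sum>\<sigma>\<in>\<Omega>. \<Sum>\<tau>\<in>\<Omega>. y x \<sigma> * y x \<tau> * (w \<sigma> * P \<sigma> \<tau>))"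
      by (rule sum.reindex_bij_betw[OF bij, where g = "\<lambda>\<sigma>. \<Sum>\<tau>\<in>\<Omega>. y x \<sigma> * y x \<tau> * (w \<sigma> * P \<sigma> \<tau>)"])
    finally show ?thesis .
  qed
  have "spectral_gap (S P2) \<le> spectral_gap (S P1)"
  proof (rule gap_compare)
    show "2 \<le> N" using card by (simp add: N_def)
    show "ip N x (mv N (\<lambda>a b. S P1 $$ (a, b)) x) \<ge> 0" for x unfolding quad by (rule psd)
    show "ip N x (mv N (\<lambda>a b. S P1 $$ (a, b)) x) \<le> ip N x (mv N (\<lambda>a b. S P2 $$ (a, b)) x)" for x
      unfolding quad by (rule le)
  qed (auto intro: Sc Ssym[OF rev1] Ssym[OF rev2])
  then show ?thesis unfolding gapS .
qed

abbreviation agree :: "int list set \<Rightarrow> int list set \<Rightarrow> (int list \<Rightarrow> nat) \<Rightarrow> (int list \<Rightarrow> nat) \<Rightarrow> bool" where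
  "agree V U \<sigma> \<tau> \<equiv> (\<forall>v\<in>V - U. \<tau> v = \<sigma> v)"

lemma finite_configs: "finite V \<Longrightarrow> finite (configs V q)"
  unfolding configs_def by (rule finite_PiE) auto

lemma resample_sym:
  assumes "\<sigma> \<in> configs V q" "\<tau> \<in> configs V q"
  shows "resample V q U \<sigma> \<tau> = resample V q U \<tau> \<sigma>"
  using assms unfolding resample_def by auto

lemma card_agree:
  assumes V: "finite V" and U: "U \<subseteq> V" and \<sigma>: "\<sigma> \<in> configs V q"
  shows "card {\<tau> \<in> configs V q. agree V U \<sigma> \<tau>} = q ^ card U"
proof -
  let ?A = "{\<tau> \<in> configs V q. agree V U \<sigma> \<tau>}"
  have fU: "finite U" using V U finite_subset by blast
  have "bij_betw (\<lambda>\<tau>. restrict \<tau> U) ?A (U \<rightarrow>\<^sub>E {1..q})"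
  proof (rule bij_betwI')
    fix x y assume x: "x \<in> ?A" and y: "y \<in> ?A"
    show "(restrict x U = restrict y U) = (x = y)"
    proof
      assume eq: "restrict x U = restrict y U"
      show "x = y"
      proof
        fix v
        show "x v = y v"
        proof (cases "v \<in> U")
          case True then show ?thesis using fun_cong[OF eq, of v] by simp
        next
          case False
          show ?thesis
          proof (cases "v \<in> V")
            case True then show ?thesis using x y False by auto
          next
            case False2: False
            then show ?thesis using x y unfolding configs_def by (auto simp: PiE_def extensional_def)
          qed
        qed
      qed
    qed simp
  next
    fix x assume x: "x \<in> ?A"
    then show "restrict x U \<in> U \<rightarrow>\<^sub>E {1..q}" using U unfolding configs_def by auto
  next
    fix f assume f: "f \<in> U \<rightarrow>\<^sub>E {1..q}"
    define \<tau> where "\<tau> = (\<lambda>v. if v \<in> U then f v else \<sigma> v)"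
    have "\<tau> \<in> ?A" using f \<sigma> U unfolding \<tau>_def configs_def by (auto simp: PiE_def extensional_def Pi_def)
    moreover have "f = restrict \<tau> U" using f unfolding \<tau>_def by (auto simp: PiE_def extensional_def restrict_def)
    ultimately show "\<exists>x\<in>?A. f = restrict x U" by blast
  qed
  then have "card ?A = card (U \<rightarrow>\<^sub>E {1..q})" by (rule bij_betw_same_card)
  also have "\<dots> = q ^ card U" using fU by (simp add: card_PiE)
  finally show ?thesis .
qed

lemma resample_sum1:
  assumes V: "finite V" and U: "U \<subseteq> V" and \<sigma>: "\<sigma> \<in> configs V q" and q: "q \<ge> 1"
  shows "(\<Sum>\<tau>\<in>configs V q. resample V q U \<sigma> \<tau>) = 1"
proof -
  have "(\<Sum>\<tau>\<in>configs V q. resample V q U \<sigma> \<tau>) = (\<Sum>\<tau>\<in>{\<tau> \<in> configs V q. agree V U \<sigma> \<tau>}. 1 / real q ^ card U)"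
    unfolding resample_def by (rule sum.mono_neutral_cong_right) (auto simp: finite_configs[OF V])
  also have "\<dots> = 1" using card_agree[OF V U \<sigma>] q by simp
  finally show ?thesis .
qed

lemma resample_comp:
  assumes V: "finite V" and U: "U \<subseteq> V" and U': "U' \<subseteq> U" and q: "q \<ge> 1"
    and \<sigma>: "\<sigma> \<in> configs V q" and \<tau>: "\<tau> \<in> configs V q"
  shows "(\<Sum>\<rho>\<in>configs V q. resample V q U \<sigma> \<rho> * resample V q U' \<rho> \<tau>) = resample V q U \<sigma> \<tau>"
proof (cases "agree V U \<sigma> \<tau>")
  case True
  have "(\<Sum>\<rho>\<in>configs V q. resample V q U \<sigma> \<rho> * resample V q U' \<rho> \<tau>)
      = (\<Sum>\<rho>\<in>configs V q. (1 / real q ^ card U) * resample V q U' \<tau> \<rho>)"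
  proof (intro sum.cong refl)
    fix \<rho> assume \<rho>: "\<rho> \<in> configs V q"
    have rs: "resample V q U' \<tau> \<rho> = resample V q U' \<rho> \<tau>" by (rule resample_sym[OF \<tau> \<rho>])
    show "resample V q U \<sigma> \<rho> * resample V q U' \<rho> \<tau> = (1 / real q ^ card U) * resample V q U' \<tau> \<rho>"
    proof (cases "agree V U' \<rho> \<tau>")
      case True2: True
      have "agree V U \<sigma> \<rho>"
      proof
        fix v assume v: "v \<in> V - U"
        then have "v \<in> V - U'" using U' by blast
        then have "\<tau> v = \<rho> v" using True2 by blast
        moreover have "\<tau> v = \<sigma> v" using True v by blast
        ultimately show "\<rho> v = \<sigma> v" by simp
      qed
      then have "resample V q U \<sigma> \<rho> = 1 / real q ^ card U" using \<rho> unfolding resample_def by simp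
      then show ?thesis unfolding rs by simp
    next
      case False
      then have "resample V q U' \<rho> \<tau> = 0" unfolding resample_def by auto
      then show ?thesis unfolding rs by simp
    qed
  qed
  also have "\<dots> = 1 / real q ^ card U"
  proof -
    have "U' \<subseteq> V" using U U' by blast
    then have "(\<Sum>\<rho>\<in>configs V q. resample V q U' \<tau> \<rho>) = 1" by (rule resample_sum1[OF V _ \<tau> q])
    then show ?thesis by (simp add: sum_divide_distrib[symmetric])
  qed
  also have "\<dots> = resample V q U \<sigma> \<tau>" using True \<tau> unfolding resample_def by simp
  finally show ?thesis .
next
  case False
  have "resample V q U \<sigma> \<rho> * resample V q U' \<rho> \<tau> = 0" for \<rho>
  proof (cases "agree V U \<sigma> \<rho> \<and> agree V U' \<rho> \<tau>")
    case True
    have "agree V U \<sigma> \<tau>"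
    proof
      fix v assume v: "v \<in> V - U"
      then have "v \<in> V - U'" using U' by blast
      then show "\<tau> v = \<sigma> v" using True v by auto
    qed
    then show ?thesis using False by blast
  next
    case False
    then show ?thesis unfolding resample_def by auto
  qed
  then have "(\<Sum>\<rho>\<in>configs V q. resample V q U \<sigma> \<rho> * resample V q U' \<rho> \<tau>) = 0" by simp
  moreover have "resample V q U \<sigma> \<tau> = 0" using False unfolding resample_def by auto
  ultimately show ?thesis by simp
qed

definition Qf :: "int list set \<Rightarrow> nat \<Rightarrow> int list set \<Rightarrow> ((int list \<Rightarrow> nat) \<Rightarrow> real) \<Rightarrow> real" where
  "Qf V q U y = (\<Sum>\<sigma>\<in>configs V q. \<Sum>\<tau>\<in>configs V q. y \<sigma> * y \<tau> * resample V q U \<sigma> \<tau>)"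

definition Ef :: "int list set \<Rightarrow> nat \<Rightarrow> int list set \<Rightarrow> ((int list \<Rightarrow> nat) \<Rightarrow> real) \<Rightarrow> (int list \<Rightarrow> nat) \<Rightarrow> real" where
  "Ef V q U y \<sigma> = (\<Sum>\<tau>\<in>configs V q. resample V q U \<sigma> \<tau> * y \<tau>)"

lemma Qf_sq:
  assumes V: "finite V" and U: "U \<subseteq> V" and q: "q \<ge> 1"
  shows "Qf V q U y = (\<Sum>\<sigma>\<in>configs V q. (Ef V q U y \<sigma>)\<^sup>2)"
proof -
  let ?C = "configs V q" and ?R = "resample V q U"
  have "(\<Sum>\<sigma>\<in>?C. (Ef V q U y \<sigma>)\<^sup>2) = (\<Sum>\<sigma>\<in>?C. \<Sum>\<tau>\<in>?C. \<Sum>\<rho>\<in>?C. y \<tau> * y \<rho> * (?R \<tau> \<sigma> * ?R \<sigma> \<rho>))"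
  proof (intro sum.cong refl)
    fix \<sigma> assume \<sigma>: "\<sigma> \<in> ?C"
    have "(Ef V q U y \<sigma>)\<^sup>2 = (\<Sum>\<tau>\<in>?C. \<Sum>\<rho>\<in>?C. (?R \<sigma> \<tau> * y \<tau>) * (?R \<sigma> \<rho> * y \<rho>))"
      unfolding Ef_def power2_eq_square sum_product ..
    also have "\<dots> = (\<Sum>\<tau>\<in>?C. \<Sum>\<rho>\<in>?C. y \<tau> * y \<rho> * (?R \<tau> \<sigma> * ?R \<sigma> \<rho>))"
      by (intro sum.cong refl) (simp add: resample_sym[OF \<sigma>] mult_ac)
    finally show "(Ef V q U y \<sigma>)\<^sup>2 = (\<Sum>\<tau>\<in>?C. \<Sum>\<rho>\<in>?C. y \<tau> * y \<rho> * (?R \<tau> \<sigma> * ?R \<sigma> \<rho>))" .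
  qed
  also have "\<dots> = (\<Sum>\<tau>\<in>?C. \<Sum>\<sigma>\<in>?C. \<Sum>\<rho>\<in>?C. y \<tau> * y \<rho> * (?R \<tau> \<sigma> * ?R \<sigma> \<rho>))" by (rule sum.swap)
  also have "\<dots> = (\<Sum>\<tau>\<in>?C. \<Sum>\<rho>\<in>?C. \<Sum>\<sigma>\<in>?C. y \<tau> * y \<rho> * (?R \<tau> \<sigma> * ?R \<sigma> \<rho>))"
    by (rule sum.cong[OF refl]) (rule sum.swap)
  also have "\<dots> = (\<Sum>\<tau>\<in>?C. \<Sum>\<rho>\<in>?C. y \<tau> * y \<rho> * ?R \<tau> \<rho>)"
  proof (intro sum.cong refl)
    fix \<tau> \<rho> assume \<tau>: "\<tau> \<in> ?C" and \<rho>: "\<rho> \<in> ?C"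
    show "(\<Sum>\<sigma>\<in>?C. y \<tau> * y \<rho> * (?R \<tau> \<sigma> * ?R \<sigma> \<rho>)) = y \<tau> * y \<rho> * ?R \<tau> \<rho>"
      using resample_comp[OF V U subset_refl q \<tau> \<rho>] by (simp add: sum_distrib_left[symmetric])
  qed
  finally show ?thesis unfolding Qf_def by simp
qed

lemma Qf_nonneg: "finite V \<Longrightarrow> U \<subseteq> V \<Longrightarrow> q \<ge> 1 \<Longrightarrow> Qf V q U y \<ge> 0"
  by (simp add: Qf_sq sum_nonneg)

lemma Ef_comp:
  assumes V: "finite V" and U: "U \<subseteq> V" and U': "U' \<subseteq> U" and q: "q \<ge> 1" and \<sigma>: "\<sigma> \<in> configs V q"
  shows "Ef V q U (Ef V q U' y) \<sigma> = Ef V q U y \<sigma>"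
proof -
  let ?C = "configs V q"
  have "Ef V q U (Ef V q U' y) \<sigma> = (\<Sum>\<tau>\<in>?C. \<Sum>\<rho>\<in>?C. resample V q U \<sigma> \<tau> * resample V q U' \<tau> \<rho> * y \<rho>)"
    unfolding Ef_def by (simp add: sum_distrib_left mult.assoc)
  also have "\<dots> = (\<Sum>\<rho>\<in>?C. \<Sum>\<tau>\<in>?C. resample V q U \<sigma> \<tau> * resample V q U' \<tau> \<rho> * y \<rho>)" by (rule sum.swap)
  also have "\<dots> = (\<Sum>\<rho>\<in>?C. resample V q U \<sigma> \<rho> * y \<rho>)"
  proof (intro sum.cong refl)
    fix \<rho> assume \<rho>: "\<rho> \<in> ?C"
    show "(\<Sum>\<tau>\<in>?C. resample V q U \<sigma> \<tau> * resample V q U' \<tau> \<rho> * y \<rho>) = resample V q U \<sigma> \<rho> * y \<rho>"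
      using resample_comp[OF V U U' q \<sigma> \<rho>] by (simp add: sum_distrib_right[symmetric])
  qed
  finally show ?thesis unfolding Ef_def .
qed

lemma Qf_le_sq:
  assumes V: "finite V" and U: "U \<subseteq> V" and q: "q \<ge> 1"
  shows "Qf V q U z \<le> (\<Sum>\<sigma>\<in>configs V q. (z \<sigma>)\<^sup>2)"
proof -
  let ?C = "configs V q"
  have lin: "(\<Sum>\<sigma>\<in>?C. z \<sigma> * Ef V q U z \<sigma>) = Qf V q U z"
    unfolding Qf_def Ef_def by (simp add: sum_distrib_left mult_ac)
  have "0 \<le> (\<Sum>\<sigma>\<in>?C. (z \<sigma> - Ef V q U z \<sigma>)\<^sup>2)" by (rule sum_nonneg) simp
  also have "\<dots> = (\<Sum>\<sigma>\<in>?C. (z \<sigma>)\<^sup>2) - 2 * (\<Sum>\<sigma>\<in>?C. z \<sigma> * Ef V q U z \<sigma>) + (\<Sum>\<sigma>\<in>?C. (Ef V q U z \<sigma>)\<^sup>2)"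
    by (simp add: power2_diff sum.distrib sum_subtractf sum_distrib_left mult.assoc)
  finally show ?thesis unfolding lin Qf_sq[OF V U q, symmetric] by simp
qed

lemma Qf_mono:
  assumes V: "finite V" and U: "U \<subseteq> V" and U': "U' \<subseteq> U" and q: "q \<ge> 1"
  shows "Qf V q U y \<le> Qf V q U' y"
proof -
  have U'V: "U' \<subseteq> V" using U U' by blast
  have "Qf V q U y = (\<Sum>\<sigma>\<in>configs V q. (Ef V q U y \<sigma>)\<^sup>2)" by (rule Qf_sq[OF V U q])
  also have "\<dots> = (\<Sum>\<sigma>\<in>configs V q. (Ef V q U (Ef V q U' y) \<sigma>)\<^sup>2)"
    by (intro sum.cong refl) (simp add: Ef_comp[OF V U U' q])
  also have "\<dots> = Qf V q U (Ef V q U' y)" by (rule Qf_sq[OF V U q, symmetric])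
  also have "\<dots> \<le> (\<Sum>\<sigma>\<in>configs V q. (Ef V q U' y \<sigma>)\<^sup>2)" by (rule Qf_le_sq[OF V U q])
  also have "\<dots> = Qf V q U' y" by (rule Qf_sq[OF V U'V q, symmetric])
  finally show ?thesis .
qed

lemma finite_edges: "finite V \<Longrightarrow> finite (edges V)"
proof -
  assume "finite V"
  moreover have "edges V \<subseteq> Pow V" unfolding edges_def by auto
  ultimately show ?thesis by (meson finite_Pow_iff finite_subset)
qed

lemma finite_mono: "finite V \<Longrightarrow> finite (mono_edges V \<sigma>)"
  using finite_edges unfolding mono_edges_def by auto

lemma weight_perc:
  assumes E: "finite E" and A: "A \<subseteq> E"
  shows "exp (\<beta> * real (card E)) * perc (1 - exp (-\<beta>)) E A = ((1 - exp (-\<beta>)) * exp \<beta>) ^ card A"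
proof -
  have cA: "card A \<le> card E" using card_mono[OF E A] .
  have "exp (-\<beta>) ^ (card E - card A) = exp (real (card E - card A) * (-\<beta>))"
    by (rule exp_of_nat_mult[symmetric])
  then have "exp (\<beta> * real (card E)) * exp (-\<beta>) ^ (card E - card A) = exp (\<beta> * real (card E) + real (card E - card A) * (-\<beta>))"
    by (simp add: exp_add[symmetric])
  also have "\<beta> * real (card E) + real (card E - card A) * (-\<beta>) = real (card A) * \<beta>"
    using cA by (simp add: of_nat_diff algebra_simps)
  also have "exp (real (card A) * \<beta>) = exp \<beta> ^ card A" by (rule exp_of_nat_mult)
  finally have "exp (\<beta> * real (card E)) * exp (-\<beta>) ^ (card E - card A) = exp \<beta> ^ card A" .
  then show ?thesis unfolding perc_def by (simp add: power_mult_distrib mult_ac)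
qed

lemma mono_stable:
  assumes A: "A \<subseteq> mono_edges V \<sigma>" and U: "U \<subseteq> isolated V A" and R: "resample V q U \<sigma> \<tau> \<noteq> 0"
  shows "A \<subseteq> mono_edges V \<tau>"
proof
  fix e assume e: "e \<in> A"
  from R have ag: "\<forall>v\<in>V - U. \<tau> v = \<sigma> v" unfolding resample_def by (auto split: if_splits)
  from e A have eE: "e \<in> edges V" and "\<exists>u v. e = {u, v} \<and> \<sigma> u = \<sigma> v" unfolding mono_edges_def by auto
  then obtain u v where uv: "e = {u, v}" "\<sigma> u = \<sigma> v" by blast
  have eV: "e \<subseteq> V" using eE unfolding edges_def by auto
  have nU: "x \<notin> U" if "x \<in> e" for x using U e that unfolding isolated_def by auto
  have "\<tau> u = \<sigma> u" using ag eV nU uv by auto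
  moreover have "\<tau> v = \<sigma> v" using ag eV nU uv by auto
  ultimately have "\<tau> u = \<tau> v" using uv by simp
  then show "e \<in> mono_edges V \<tau>" unfolding mono_edges_def using eE uv by blast
qed

definition gA :: "int list set \<Rightarrow> int list set set \<Rightarrow> (int list \<Rightarrow> nat) \<Rightarrow> real" where
  "gA V A \<sigma> = (if A \<subseteq> mono_edges V \<sigma> then 1 else 0)"

lemma rewrite_kernel:
  fixes Uf :: "int list set set \<Rightarrow> int list set"
  assumes V: "finite V" and Uf: "\<And>A. Uf A \<subseteq> isolated V A"
  shows "exp (\<beta> * real (card (mono_edges V \<sigma>))) *
      (\<Sum>A\<in>Pow (mono_edges V \<sigma>). perc (1 - exp (-\<beta>)) (mono_edges V \<sigma>) A * resample V q (Uf A) \<sigma> \<tau>)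
    = (\<Sum>A\<in>Pow (edges V). ((1 - exp (-\<beta>)) * exp \<beta>) ^ card A * (gA V A \<sigma> * gA V A \<tau>) * resample V q (Uf A) \<sigma> \<tau>)"
proof -
  let ?E = "mono_edges V \<sigma>" and ?c = "(1 - exp (-\<beta>)) * exp \<beta>"
  have fE: "finite ?E" by (rule finite_mono[OF V])
  have "exp (\<beta> * real (card ?E)) * (\<Sum>A\<in>Pow ?E. perc (1 - exp (-\<beta>)) ?E A * resample V q (Uf A) \<sigma> \<tau>)
      = (\<Sum>A\<in>Pow ?E. ?c ^ card A * resample V q (Uf A) \<sigma> \<tau>)"
    unfolding sum_distrib_left
    by (intro sum.cong refl) (simp add: mult.assoc[symmetric] weight_perc[OF fE])
  also have "\<dots> = (\<Sum>A\<in>Pow (edges V). ?c ^ card A * (gA V A \<sigma> * gA V A \<tau>) * resample V q (Uf A) \<sigma> \<tau>)"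
  proof (rule sum.mono_neutral_cong_left)
    show "finite (Pow (edges V))" using finite_edges[OF V] by simp
    show "Pow ?E \<subseteq> Pow (edges V)" unfolding mono_edges_def by auto
    show "\<forall>A\<in>Pow (edges V) - Pow ?E. ?c ^ card A * (gA V A \<sigma> * gA V A \<tau>) * resample V q (Uf A) \<sigma> \<tau> = 0"
      unfolding gA_def by auto
    show "?c ^ card A * resample V q (Uf A) \<sigma> \<tau> = ?c ^ card A * (gA V A \<sigma> * gA V A \<tau>) * resample V q (Uf A) \<sigma> \<tau>"
      if A: "A \<in> Pow ?E" for A
    proof (cases "resample V q (Uf A) \<sigma> \<tau> = 0")
      case False
      then have "A \<subseteq> mono_edges V \<tau>" using mono_stable[of A V \<sigma> "Uf A" q \<tau>] A Uf by auto
      then show ?thesis using A unfolding gA_def by simp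
    qed simp
  qed
  finally show ?thesis .
qed

lemma quad_swap:
  fixes Uf :: "int list set set \<Rightarrow> int list set" and F :: "int list set set set" and k :: "int list set set \<Rightarrow> real"
  shows "(\<Sum>\<sigma>\<in>configs V q. \<Sum>\<tau>\<in>configs V q. x \<sigma> * x \<tau> *
            (\<Sum>A\<in>F. k A * (gA V A \<sigma> * gA V A \<tau>) * resample V q (Uf A) \<sigma> \<tau>))
       = (\<Sum>A\<in>F. k A * Qf V q (Uf A) (\<lambda>\<sigma>. x \<sigma> * gA V A \<sigma>))"
proof -
  have "(\<Sum>\<sigma>\<in>configs V q. \<Sum>\<tau>\<in>configs V q. x \<sigma> * x \<tau> *
            (\<Sum>A\<in>F. k A * (gA V A \<sigma> * gA V A \<tau>) * resample V q (Uf A) \<sigma> \<tau>))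
     = (\<Sum>\<sigma>\<in>configs V q. \<Sum>\<tau>\<in>configs V q. \<Sum>A\<in>F. k A * ((x \<sigma> * gA V A \<sigma>) * (x \<tau> * gA V A \<tau>) * resample V q (Uf A) \<sigma> \<tau>))"
    by (simp add: sum_distrib_left mult_ac)
  also have "\<dots> = (\<Sum>\<sigma>\<in>configs V q. \<Sum>A\<in>F. \<Sum>\<tau>\<in>configs V q. k A * ((x \<sigma> * gA V A \<sigma>) * (x \<tau> * gA V A \<tau>) * resample V q (Uf A) \<sigma> \<tau>))"
    by (rule sum.cong[OF refl]) (rule sum.swap)
  also have "\<dots> = (\<Sum>A\<in>F. \<Sum>\<sigma>\<in>configs V q. \<Sum>\<tau>\<in>configs V q. k A * ((x \<sigma> * gA V A \<sigma>) * (x \<tau> * gA V A \<tau>) * resample V q (Uf A) \<sigma> \<tau>))"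
    by (rule sum.swap)
  also have "\<dots> = (\<Sum>A\<in>F. k A * Qf V q (Uf A) (\<lambda>\<sigma>. x \<sigma> * gA V A \<sigma>))"
    unfolding Qf_def by (simp add: sum_distrib_left)
  finally show ?thesis .
qed

lemma potts_forms:
  assumes V: "finite V" and q: "q \<ge> 1" and \<beta>: "\<beta> \<ge> 0"
    and TI: "finite (tile_index d L)" "tile_index d L \<noteq> {}"
  defines "w \<equiv> (\<lambda>\<sigma>. exp (\<beta> * real (card (mono_edges V \<sigma>))))"
  shows "\<And>\<sigma> \<tau>. \<sigma> \<in> configs V q \<Longrightarrow> \<tau> \<in> configs V q \<Longrightarrow> w \<sigma> * P_SW \<beta> q V \<sigma> \<tau> = w \<tau> * P_SW \<beta> q V \<tau> \<sigma>"
    and "\<And>\<sigma> \<tau>. \<sigma> \<in> configs V q \<Longrightarrow> \<tau> \<in> configs V q \<Longrightarrow> w \<sigma> * P_D \<beta> q d L V \<sigma> \<tau> = w \<tau> * P_D \<beta> q d L V \<tau> \<sigma>"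
    and "\<And>x. (\<Sum>\<sigma>\<in>configs V q. \<Sum>\<tau>\<in>configs V q. x \<sigma> * x \<tau> * (w \<sigma> * P_SW \<beta> q V \<sigma> \<tau>)) \<ge> 0"
    and "\<And>x. (\<Sum>\<sigma>\<in>configs V q. \<Sum>\<tau>\<in>configs V q. x \<sigma> * x \<tau> * (w \<sigma> * P_SW \<beta> q V \<sigma> \<tau>))
          \<le> (\<Sum>\<sigma>\<in>configs V q. \<Sum>\<tau>\<in>configs V q. x \<sigma> * x \<tau> * (w \<sigma> * P_D \<beta> q d L V \<sigma> \<tau>))"
proof -
  let ?C = "configs V q" and ?c = "(1 - exp (-\<beta>)) * exp \<beta>" and ?T = "tile_index d L"
  define m where "m = card ?T"
  have mpos: "m > 0" using TI unfolding m_def by (simp add: card_gt_0_iff)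
  have cnn: "?c \<ge> 0" using \<beta> by simp
  define K where "K Uf \<sigma> \<tau> = (\<Sum>A\<in>Pow (edges V). ?c ^ card A * (gA V A \<sigma> * gA V A \<tau>) * resample V q (Uf A) \<sigma> \<tau>)"
    for Uf :: "int list set set \<Rightarrow> int list set" and \<sigma> \<tau>
  define Ux where "Ux x A = isolated V A \<inter> (tile d L x \<inter> V)" for x A
  have isoV: "isolated V A \<subseteq> V" for A unfolding isolated_def by auto
  have Ksym: "K Uf \<sigma> \<tau> = K Uf \<tau> \<sigma>" if "\<sigma> \<in> ?C" "\<tau> \<in> ?C" for Uf \<sigma> \<tau>
    unfolding K_def by (intro sum.cong refl) (simp add: resample_sym[OF that] mult_ac)
  have SW: "w \<sigma> * P_SW \<beta> q V \<sigma> \<tau> = K (isolated V) \<sigma> \<tau>" for \<sigma> \<tau>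
    unfolding w_def P_SW_def K_def by (rule rewrite_kernel[OF V]) simp
  have D: "w \<sigma> * P_D \<beta> q d L V \<sigma> \<tau> = (1 / real m) * (\<Sum>x\<in>?T. K (Ux x) \<sigma> \<tau>)" for \<sigma> \<tau>
  proof -
    have "w \<sigma> * P_D \<beta> q d L V \<sigma> \<tau> = (1 / real m) * (\<Sum>x\<in>?T. w \<sigma> * (\<Sum>A\<in>Pow (mono_edges V \<sigma>).
         perc (1 - exp (-\<beta>)) (mono_edges V \<sigma>) A * resample V q (Ux x A) \<sigma> \<tau>))"
      unfolding P_D_def m_def Ux_def by (simp add: sum_distrib_left mult_ac)
    also have "\<dots> = (1 / real m) * (\<Sum>x\<in>?T. K (Ux x) \<sigma> \<tau>)"
      unfolding w_def K_def by (intro arg_cong[where f = "\<lambda>s. _ * s"] sum.cong refl rewrite_kernel[OF V]) (auto simp: Ux_def)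
    finally show ?thesis .
  qed
  have quad: "(\<Sum>\<sigma>\<in>?C. \<Sum>\<tau>\<in>?C. x \<sigma> * x \<tau> * K Uf \<sigma> \<tau>) = (\<Sum>A\<in>Pow (edges V). ?c ^ card A * Qf V q (Uf A) (\<lambda>\<sigma>. x \<sigma> * gA V A \<sigma>))"
    for x Uf unfolding K_def by (rule quad_swap)
  show "\<And>\<sigma> \<tau>. \<sigma> \<in> ?C \<Longrightarrow> \<tau> \<in> ?C \<Longrightarrow> w \<sigma> * P_SW \<beta> q V \<sigma> \<tau> = w \<tau> * P_SW \<beta> q V \<tau> \<sigma>"
    unfolding SW by (rule Ksym)
  show "\<And>\<sigma> \<tau>. \<sigma> \<in> ?C \<Longrightarrow> \<tau> \<in> ?C \<Longrightarrow> w \<sigma> * P_D \<beta> q d L V \<sigma> \<tau> = w \<tau> * P_D \<beta> q d L V \<tau> \<sigma>"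
    unfolding D by (simp add: Ksym)
  have QSW: "(\<Sum>\<sigma>\<in>?C. \<Sum>\<tau>\<in>?C. x \<sigma> * x \<tau> * (w \<sigma> * P_SW \<beta> q V \<sigma> \<tau>))
     = (\<Sum>A\<in>Pow (edges V). ?c ^ card A * Qf V q (isolated V A) (\<lambda>\<sigma>. x \<sigma> * gA V A \<sigma>))" for x
    unfolding SW by (rule quad)
  show "(\<Sum>\<sigma>\<in>?C. \<Sum>\<tau>\<in>?C. x \<sigma> * x \<tau> * (w \<sigma> * P_SW \<beta> q V \<sigma> \<tau>)) \<ge> 0" for x
    unfolding QSW by (intro sum_nonneg mult_nonneg_nonneg zero_le_power cnn Qf_nonneg[OF V isoV q])
  show "(\<Sum>\<sigma>\<in>?C. \<Sum>\<tau>\<in>?C. x \<sigma> * x \<tau> * (w \<sigma> * P_SW \<beta> q V \<sigma> \<tau>))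
          \<le> (\<Sum>\<sigma>\<in>?C. \<Sum>\<tau>\<in>?C. x \<sigma> * x \<tau> * (w \<sigma> * P_D \<beta> q d L V \<sigma> \<tau>))" for x
  proof -
    have "(\<Sum>\<sigma>\<in>?C. \<Sum>\<tau>\<in>?C. x \<sigma> * x \<tau> * (w \<sigma> * P_D \<beta> q d L V \<sigma> \<tau>))
        = (1 / real m) * (\<Sum>y\<in>?T. \<Sum>\<sigma>\<in>?C. \<Sum>\<tau>\<in>?C. x \<sigma> * x \<tau> * K (Ux y) \<sigma> \<tau>)"
    proof -
      have "(\<Sum>\<sigma>\<in>?C. \<Sum>\<tau>\<in>?C. x \<sigma> * x \<tau> * (w \<sigma> * P_D \<beta> q d L V \<sigma> \<tau>))
          = (1 / real m) * (\<Sum>\<sigma>\<in>?C. \<Sum>\<tau>\<in>?C. \<Sum>y\<in>?T. x \<sigma> * x \<tau> * K (Ux y) \<sigma> \<tau>)"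
        unfolding D by (simp add: sum_distrib_left mult_ac)
      also have "(\<Sum>\<sigma>\<in>?C. \<Sum>\<tau>\<in>?C. \<Sum>y\<in>?T. x \<sigma> * x \<tau> * K (Ux y) \<sigma> \<tau>)
          = (\<Sum>\<sigma>\<in>?C. \<Sum>y\<in>?T. \<Sum>\<tau>\<in>?C. x \<sigma> * x \<tau> * K (Ux y) \<sigma> \<tau>)"
        by (rule sum.cong[OF refl]) (rule sum.swap)
      also have "\<dots> = (\<Sum>y\<in>?T. \<Sum>\<sigma>\<in>?C. \<Sum>\<tau>\<in>?C. x \<sigma> * x \<tau> * K (Ux y) \<sigma> \<tau>)" by (rule sum.swap)
      finally show ?thesis .
    qed
    also have "\<dots> = (1 / real m) * (\<Sum>y\<in>?T. \<Sum>A\<in>Pow (edges V). ?c ^ card A * Qf V q (Ux y A) (\<lambda>\<sigma>. x \<sigma> * gA V A \<sigma>))"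
      unfolding quad ..
    also have "\<dots> \<ge> (1 / real m) * (\<Sum>y\<in>?T. \<Sum>A\<in>Pow (edges V). ?c ^ card A * Qf V q (isolated V A) (\<lambda>\<sigma>. x \<sigma> * gA V A \<sigma>))"
    proof -
      have ineq: "?c ^ card A * Qf V q (isolated V A) (\<lambda>\<sigma>. x \<sigma> * gA V A \<sigma>) \<le> ?c ^ card A * Qf V q (Ux y A) (\<lambda>\<sigma>. x \<sigma> * gA V A \<sigma>)" for y A
      proof -
        have "Qf V q (isolated V A) (\<lambda>\<sigma>. x \<sigma> * gA V A \<sigma>) \<le> Qf V q (Ux y A) (\<lambda>\<sigma>. x \<sigma> * gA V A \<sigma>)"
          by (rule Qf_mono[OF V isoV _ q]) (auto simp: Ux_def)
        then show ?thesis by (intro mult_left_mono zero_le_power cnn)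
      qed
      show ?thesis by (intro mult_left_mono sum_mono ineq) simp
    qed
    also have "(1 / real m) * (\<Sum>y\<in>?T. \<Sum>A\<in>Pow (edges V). ?c ^ card A * Qf V q (isolated V A) (\<lambda>\<sigma>. x \<sigma> * gA V A \<sigma>))
        = (\<Sum>\<sigma>\<in>?C. \<Sum>\<tau>\<in>?C. x \<sigma> * x \<tau> * (w \<sigma> * P_SW \<beta> q V \<sigma> \<tau>))"
      unfolding QSW using mpos by (simp add: m_def)
    finally show ?thesis .
  qed
qed

lemma cube_finite: "finite (cube d c n)"
proof -
  let ?S = "\<Union>i<d. {c ! i..<c ! i + int n}"
  have "cube d c n \<subseteq> {xs. set xs \<subseteq> ?S \<and> length xs = d}"
  proof
    fix x assume x: "x \<in> cube d c n"
    have "set x \<subseteq> ?S"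
    proof
      fix y assume "y \<in> set x"
      then obtain i where i: "i < length x" "y = x ! i" by (auto simp: in_set_conv_nth)
      then show "y \<in> ?S" using x unfolding cube_def by auto
    qed
    then show "x \<in> {xs. set xs \<subseteq> ?S \<and> length xs = d}" using x unfolding cube_def by auto
  qed
  moreover have "finite {xs. set xs \<subseteq> ?S \<and> length xs = d}" by (rule finite_lists_length_eq) auto
  ultimately show ?thesis by (rule finite_subset)
qed

lemma tile_index_finite: "finite (tile_index d L)"
proof -
  have "tile_index d L \<subseteq> {xs. set xs \<subseteq> {0..int L + 2} \<and> length xs = d}"
  proof
    fix x assume x: "x \<in> tile_index d L"
    have "set x \<subseteq> {0..int L + 2}"
    proof
      fix y assume "y \<in> set x"
      then obtain i where i: "i < length x" "y = x ! i" by (auto simp: in_set_conv_nth)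
      then show "y \<in> {0..int L + 2}" using x unfolding tile_index_def by auto
    qed
    then show "x \<in> {xs. set xs \<subseteq> {0..int L + 2} \<and> length xs = d}" using x unfolding tile_index_def by auto
  qed
  moreover have "finite {xs. set xs \<subseteq> {0..int L + 2} \<and> length xs = d}" by (rule finite_lists_length_eq) auto
  ultimately show ?thesis by (rule finite_subset)
qed

lemma tile_index_ne: "tile_index d L \<noteq> {}"
proof -
  have "replicate d 0 \<in> tile_index d L" unfolding tile_index_def by auto
  then show ?thesis by blast
qed

theorem mainTheorem9:
  fixes q d L n :: nat and \<beta> :: real and c :: "int list"
  assumes "q \<ge> 2" and "\<beta> > 0" and "odd L"
    and "d \<ge> 1" and "length c = d" and "n \<ge> 1"
  shows "spectral_gap (trans_mat (configs (cube d c n) q) (P_SW \<beta> q (cube d c n)))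
         \<ge> spectral_gap (trans_mat (configs (cube d c n) q) (P_D \<beta> q d L (cube d c n)))"
proof -
  let ?V = "cube d c n"
  have V: "finite ?V" by (rule cube_finite)
  have cV: "c \<in> ?V" using assms unfolding cube_def by auto
  have q1: "q \<ge> 1" using assms by simp
  have b0: "\<beta> \<ge> 0" using assms by simp
  have cardV: "card ?V \<ge> 1" using V cV by (metis One_nat_def Suc_leI card_gt_0_iff empty_iff)
  have "card (configs ?V q) = q ^ card ?V" unfolding configs_def using V by (simp add: card_PiE)
  also have "\<dots> \<ge> 2 ^ 1"
    using assms(1) cardV by (meson le_trans one_le_numeral power_increasing power_mono zero_le_numeral)
  finally have card2: "card (configs ?V q) \<ge> 2" by simp
  note F = potts_forms[OF V q1 b0 tile_index_finite[of d L] tile_index_ne[of d L]]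
  show ?thesis
  proof (rule abstract_gap[where w = "\<lambda>\<sigma>. exp (\<beta> * real (card (mono_edges ?V \<sigma>)))"])
    show "finite (configs ?V q)" by (rule finite_configs[OF V])
    show "card (configs ?V q) \<ge> 2" by (rule card2)
  qed (use F in auto)
qed

end
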